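(* Let $S$ be a dense subsemigroup of $((0,\infty),+)$ and let $\mathcal{K}=\{A\subseteq S: S\setminus A \text{ is not piecewise syndetic near zero}\}$. Then $\mathcal{K}$ is a filter on $S$, $\mathrm{Cl}\,K(O^{+}(S))=\overline{\mathcal{K}}$, and this set is a compact subsemigroup of $\beta S$.
   Context: "Dense" means dense in the usual topology of $(0,\infty)$. $\beta S$ is the Stone–Čech compactification of the discrete set $S$ (ultrafilters on $S$), with $+$ extended so that $(\beta S,+)$ is a compact right topological semigroup: $A\in p+q$ iff $\{x\in S:-x+A\in q\}\in p$, where $-x+A=\{y\in S:x+y\in A\}$. $O^{+}(S)=\{p\in\beta S: S\cap(0,\epsilon)\in p\text{ for every }\epsilon>0\}$, a compact right topological subsemigroup of $\beta S$; $K(O^{+}(S))$ is its smallest two-sided ideal and $\mathrm{Cl}$ denotes closure in $\beta S$. For a filter $\mathcal{K}$ on $S$, $\overline{\mathcal{K}}=\{p\in\beta S:\mathcal{K}\subseteq p\}$. A subset $A\subseteq S$ is piecewise syndetic near zero iff there exist sequences $\langle F_n\rangle_{n=1}^\infty$ and $\langle\delta_n\rangle_{n=1}^\infty$ such that (1) for each $n\in\mathbb{N}$, $F_n$ is a finite nonempty subset of $(0,\frac1n)\cap S$ and $\delta_n\in(0,\frac1n)$, and (2) for every finite nonempty $G\subseteq S$ and every $\mu>0$ there is $x\in(0,\mu)\cap S$ such that for all $n\in\mathbb{N}$, $(G\cap(0,\delta_n))+x\subseteq\bigcup_{t\in F_n}(-t+A)$. *)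

theory Defs
  imports "HOL-Analysis.Analysis"
begin

definition dense_subsemigroup :: "real set \<Rightarrow> bool" where
  "dense_subsemigroup S \<longleftrightarrow> S \<subseteq> {0<..} \<and> (\<forall>x\<in>S. \<forall>y\<in>S. x + y \<in> S)
     \<and> (\<forall>a b. 0 < a \<and> a < b \<longrightarrow> (\<exists>s\<in>S. a < s \<and> s < b))"

definition ltrans :: "real set \<Rightarrow> real \<Rightarrow> real set \<Rightarrow> real set" where
  "ltrans S x A = {y \<in> S. x + y \<in> A}"

definition filter_on :: "real set \<Rightarrow> real set set \<Rightarrow> bool" where
  "filter_on S F \<longleftrightarrow> F \<subseteq> Pow S \<and> S \<in> F \<and> {} \<notin> F
     \<and> (\<forall>A\<in>F. \<forall>B\<in>F. A \<inter> B \<in> F)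
     \<and> (\<forall>A\<in>F. \<forall>B. A \<subseteq> B \<and> B \<subseteq> S \<longrightarrow> B \<in> F)"

definition ultrafilter_on :: "real set \<Rightarrow> real set set \<Rightarrow> bool" where
  "ultrafilter_on S p \<longleftrightarrow> filter_on S p \<and> (\<forall>A. A \<subseteq> S \<longrightarrow> A \<in> p \<or> S - A \<in> p)"

definition betaS :: "real set \<Rightarrow> real set set set" where
  "betaS S = {p. ultrafilter_on S p}"

definition betaTop :: "real set \<Rightarrow> real set set topology" where
  "betaTop S = topology_generated_by {{p \<in> betaS S. A \<in> p} | A. A \<subseteq> S}"

definition bplus :: "real set \<Rightarrow> real set set \<Rightarrow> real set set \<Rightarrow> real set set" where
  "bplus S p q = {A. A \<subseteq> S \<and> {x \<in> S. ltrans S x A \<in> q} \<in> p}"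

definition Oplus :: "real set \<Rightarrow> real set set set" where
  "Oplus S = {p \<in> betaS S. \<forall>\<epsilon>>0. S \<inter> {0<..<\<epsilon>} \<in> p}"

definition two_sided_ideal :: "real set \<Rightarrow> real set set set \<Rightarrow> real set set set \<Rightarrow> bool" where
  "two_sided_ideal S T I \<longleftrightarrow> I \<noteq> {} \<and> I \<subseteq> T
     \<and> (\<forall>p\<in>T. \<forall>q\<in>I. bplus S p q \<in> I \<and> bplus S q p \<in> I)"

definition Kmin :: "real set \<Rightarrow> real set set set \<Rightarrow> real set set set" where
  "Kmin S T = (THE I. two_sided_ideal S T I \<and> (\<forall>J. two_sided_ideal S T J \<longrightarrow> I \<subseteq> J))"

definition pw_syndetic_near_zero :: "real set \<Rightarrow> real set \<Rightarrow> bool" where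
  "pw_syndetic_near_zero S A \<longleftrightarrow>
    (\<exists>F :: nat \<Rightarrow> real set. \<exists>\<delta> :: nat \<Rightarrow> real.
       (\<forall>n\<ge>1. finite (F n) \<and> F n \<noteq> {} \<and> F n \<subseteq> {0<..<1 / real n} \<inter> S
              \<and> 0 < \<delta> n \<and> \<delta> n < 1 / real n)
     \<and> (\<forall>G. finite G \<and> G \<noteq> {} \<and> G \<subseteq> S \<longrightarrow>
          (\<forall>\<mu>>0. \<exists>x\<in>S. 0 < x \<and> x < \<mu> \<and>
             (\<forall>n\<ge>1. (\<lambda>g. g + x) ` (G \<inter> {0<..<\<delta> n}) \<subseteq> (\<Union>t\<in>F n. ltrans S t A)))))"

definition Kfilt :: "real set \<Rightarrow> real set set" where
  "Kfilt S = {A. A \<subseteq> S \<and> \<not> pw_syndetic_near_zero S (S - A)}"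

definition filter_closure :: "real set \<Rightarrow> real set set \<Rightarrow> real set set set" where
  "filter_closure S K = {p \<in> betaS S. K \<subseteq> p}"

end

theory Submission
  imports Defs
begin

definition fip :: "real set \<Rightarrow> real set set \<Rightarrow> bool" where
  "fip S M \<longleftrightarrow> (\<forall>F. finite F \<and> F \<subseteq> M \<longrightarrow> S \<inter> \<Inter>F \<noteq> {})"

lemma fipD: "fip S M \<Longrightarrow> finite F \<Longrightarrow> F \<subseteq> M \<Longrightarrow> S \<inter> \<Inter>F \<noteq> {}"
  unfolding fip_def by blast

lemma uf_filter: "ultrafilter_on S p \<Longrightarrow> filter_on S p"
  by (simp add: ultrafilter_on_def)

lemma uf_sub: "ultrafilter_on S p \<Longrightarrow> A \<in> p \<Longrightarrow> A \<subseteq> S"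
  by (auto simp: ultrafilter_on_def filter_on_def)

lemma uf_S: "ultrafilter_on S p \<Longrightarrow> S \<in> p"
  by (auto simp: ultrafilter_on_def filter_on_def)

lemma uf_empty: "ultrafilter_on S p \<Longrightarrow> {} \<notin> p"
  by (auto simp: ultrafilter_on_def filter_on_def)

lemma uf_Int: "ultrafilter_on S p \<Longrightarrow> A \<in> p \<Longrightarrow> B \<in> p \<Longrightarrow> A \<inter> B \<in> p"
  by (auto simp: ultrafilter_on_def filter_on_def)

lemma uf_mono: "ultrafilter_on S p \<Longrightarrow> A \<in> p \<Longrightarrow> A \<subseteq> B \<Longrightarrow> B \<subseteq> S \<Longrightarrow> B \<in> p"
  unfolding ultrafilter_on_def filter_on_def by blast

lemma uf_compl: "ultrafilter_on S p \<Longrightarrow> A \<subseteq> S \<Longrightarrow> A \<notin> p \<Longrightarrow> S - A \<in> p"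
  by (auto simp: ultrafilter_on_def)

lemma uf_compl2: "ultrafilter_on S p \<Longrightarrow> A \<in> p \<Longrightarrow> S - A \<notin> p"
proof
  assume u: "ultrafilter_on S p" and a: "A \<in> p" and b: "S - A \<in> p"
  have "A \<inter> (S - A) \<in> p" using uf_Int[OF u a b] .
  then show False using uf_empty[OF u] by simp
qed

lemma uf_Un: "ultrafilter_on S p \<Longrightarrow> A \<union> B \<in> p \<Longrightarrow> A \<in> p \<or> B \<in> p"
proof (rule ccontr)
  assume u: "ultrafilter_on S p" and ab: "A \<union> B \<in> p" and n: "\<not> (A \<in> p \<or> B \<in> p)"
  have sub: "A \<union> B \<subseteq> S" using uf_sub[OF u ab] .
  have "S - A \<in> p" "S - B \<in> p" using uf_compl[OF u] sub n by auto
  then have "(A \<union> B) \<inter> ((S - A) \<inter> (S - B)) \<in> p" using uf_Int[OF u] ab by blast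
  moreover have "(A \<union> B) \<inter> ((S - A) \<inter> (S - B)) = {}" by blast
  ultimately show False using uf_empty[OF u] by simp
qed

lemma uf_UN: assumes u: "ultrafilter_on S p" shows "finite T \<Longrightarrow> (\<Union>t\<in>T. C t) \<in> p \<Longrightarrow> \<exists>t\<in>T. C t \<in> p"
proof (induction T rule: finite_induct)
  case empty then show ?case using uf_empty[OF u] by auto
next
  case (insert x F)
  then have "C x \<union> (\<Union>t\<in>F. C t) \<in> p" by simp
  then show ?case using uf_Un[OF u] insert by blast
qed

lemma uf_Inter: assumes u: "ultrafilter_on S p" shows "finite F \<Longrightarrow> F \<subseteq> p \<Longrightarrow> S \<inter> \<Inter>F \<in> p"
proof (induction F rule: finite_induct)
  case empty then show ?case using uf_S[OF u] by auto
next
  case (insert x F)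
  then have "x \<inter> (S \<inter> \<Inter>F) \<in> p" using uf_Int[OF u] by auto
  then show ?case by (simp add: Int_ac)
qed

lemma uf_fip: "ultrafilter_on S p \<Longrightarrow> fip S p"
  unfolding fip_def using uf_Inter uf_empty by metis

lemma uf_eq: "ultrafilter_on S p \<Longrightarrow> ultrafilter_on S q \<Longrightarrow> p \<subseteq> q \<Longrightarrow> p = q"
proof
  assume u: "ultrafilter_on S p" and v: "ultrafilter_on S q" and pq: "p \<subseteq> q"
  show "q \<subseteq> p"
  proof
    fix A assume "A \<in> q"
    show "A \<in> p"
    proof (rule ccontr)
      assume "A \<notin> p"
      then have "S - A \<in> p" using uf_compl[OF u] uf_sub[OF v \<open>A \<in> q\<close>] by blast
      then have "S - A \<in> q" using pq by blast
      then show False using uf_compl2[OF v \<open>A \<in> q\<close>] by blast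
    qed
  qed
qed

lemma fip_insert:
  assumes "fip S M" and "\<And>G. finite G \<Longrightarrow> G \<subseteq> M \<Longrightarrow> S \<inter> \<Inter>G \<inter> A \<noteq> {}"
  shows "fip S (insert A M)"
  unfolding fip_def
proof (intro allI impI)
  fix F assume F: "finite F \<and> F \<subseteq> insert A M"
  have "S \<inter> \<Inter>(F - {A}) \<inter> A \<subseteq> S \<inter> \<Inter>F" by auto
  moreover have "S \<inter> \<Inter>(F - {A}) \<inter> A \<noteq> {}" using assms(2)[of "F - {A}"] F by auto
  ultimately show "S \<inter> \<Inter>F \<noteq> {}" by blast
qed

lemma fip_subset: "fip S M \<Longrightarrow> N \<subseteq> M \<Longrightarrow> fip S N"
  unfolding fip_def by blast

lemma uf_extend:
  assumes B: "\<B> \<subseteq> Pow S" and f: "fip S \<B>"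
  shows "\<exists>p. ultrafilter_on S p \<and> \<B> \<subseteq> p"
proof -
  define \<A> where "\<A> = {M. \<B> \<subseteq> M \<and> M \<subseteq> Pow S \<and> fip S M}"
  have "\<forall>C\<in>chains \<A>. \<exists>U\<in>\<A>. \<forall>X\<in>C. X \<subseteq> U"
  proof
    fix C assume C: "C \<in> chains \<A>"
    show "\<exists>U\<in>\<A>. \<forall>X\<in>C. X \<subseteq> U"
    proof (cases "C = {}")
      case True
      then show ?thesis using B f by (auto simp: \<A>_def)
    next
      case False
      have ch: "subset.chain \<A> C" using C by (simp add: chains_alt_def)
      have CA: "C \<subseteq> \<A>" using C by (simp add: chains_def)
      have "\<Union>C \<in> \<A>"
        unfolding \<A>_def
      proof (intro CollectI conjI)
        obtain X where "X \<in> C" using False by blast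
        then have "\<B> \<subseteq> X" using CA by (auto simp: \<A>_def)
        then show "\<B> \<subseteq> \<Union>C" using \<open>X \<in> C\<close> by blast
        show "\<Union>C \<subseteq> Pow S" using CA by (auto simp: \<A>_def)
        show "fip S (\<Union>C)" unfolding fip_def
        proof (intro allI impI)
          fix F assume F: "finite F \<and> F \<subseteq> \<Union>C"
          then obtain X where "X \<in> C" "F \<subseteq> X"
            using finite_subset_Union_chain[OF _ _ False ch] by metis
          then show "S \<inter> \<Inter>F \<noteq> {}" using CA F by (auto simp: \<A>_def fip_def)
        qed
      qed
      then show ?thesis by blast
    qed
  qed
  from Zorn_Lemma2[OF this] obtain M where M: "M \<in> \<A>" and max: "\<forall>X\<in>\<A>. M \<subseteq> X \<longrightarrow> X = M"
    by blast
  have MB: "\<B> \<subseteq> M" and MS: "M \<subseteq> Pow S" and Mf: "fip S M" using M by (auto simp: \<A>_def)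
  have ins: "A \<in> M" if "A \<subseteq> S" "fip S (insert A M)" for A
  proof -
    have "insert A M \<in> \<A>" using that MB MS by (auto simp: \<A>_def)
    then show ?thesis using max by blast
  qed
  have good: "A \<in> M" if "A \<subseteq> S" "\<And>G. finite G \<Longrightarrow> G \<subseteq> M \<Longrightarrow> S \<inter> \<Inter>G \<inter> A \<noteq> {}" for A
    using ins[OF that(1) fip_insert[OF Mf that(2)]] .
  have "ultrafilter_on S M"
    unfolding ultrafilter_on_def filter_on_def
  proof (intro conjI ballI allI impI)
    show "M \<subseteq> Pow S" by fact
    show "S \<in> M"
    proof (rule good)
      fix G assume "finite G" "G \<subseteq> M"
      then show "S \<inter> \<Inter>G \<inter> S \<noteq> {}" using fipD[OF Mf] by auto
    qed simp
    show "{} \<notin> M"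
    proof
      assume "{} \<in> M"
      then have "finite {{}} \<and> {{}} \<subseteq> M" by simp
      then have "S \<inter> \<Inter>{{}} \<noteq> {}" using Mf unfolding fip_def by blast
      then show False by simp
    qed
    fix A B assume A: "A \<in> M" and B: "B \<in> M"
    show "A \<inter> B \<in> M"
    proof (rule good)
      show "A \<inter> B \<subseteq> S" using A MS by auto
      fix G assume G: "finite G" "G \<subseteq> M"
      have "S \<inter> \<Inter>(insert A (insert B G)) \<noteq> {}" by (rule fipD[OF Mf]) (use G A B in auto)
      then show "S \<inter> \<Inter>G \<inter> (A \<inter> B) \<noteq> {}" by (simp add: Int_ac)
    qed
  next
    fix A B assume A: "A \<in> M" and AB: "A \<subseteq> B \<and> B \<subseteq> S"
    show "B \<in> M"
    proof (rule good)
      show "B \<subseteq> S" using AB by simp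
      fix G assume G: "finite G" "G \<subseteq> M"
      have "S \<inter> \<Inter>(insert A G) \<noteq> {}" by (rule fipD[OF Mf]) (use G A in auto)
      then show "S \<inter> \<Inter>G \<inter> B \<noteq> {}" using AB by auto
    qed
  next
    fix A assume AS: "A \<subseteq> S"
    show "A \<in> M \<or> S - A \<in> M"
    proof (rule ccontr)
      assume n: "\<not> (A \<in> M \<or> S - A \<in> M)"
      have "\<not> (\<forall>G. finite G \<longrightarrow> G \<subseteq> M \<longrightarrow> S \<inter> \<Inter>G \<inter> A \<noteq> {})"
      proof
        assume "\<forall>G. finite G \<longrightarrow> G \<subseteq> M \<longrightarrow> S \<inter> \<Inter>G \<inter> A \<noteq> {}"
        then have "A \<in> M" using good[OF AS] by blast
        then show False using n by blast
      qed
      then obtain G1 where G1: "finite G1" "G1 \<subseteq> M" "S \<inter> \<Inter>G1 \<inter> A = {}" by blast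
      have "\<not> (\<forall>G. finite G \<longrightarrow> G \<subseteq> M \<longrightarrow> S \<inter> \<Inter>G \<inter> (S - A) \<noteq> {})"
      proof
        assume "\<forall>G. finite G \<longrightarrow> G \<subseteq> M \<longrightarrow> S \<inter> \<Inter>G \<inter> (S - A) \<noteq> {}"
        then have "S - A \<in> M" using good[of "S - A"] by blast
        then show False using n by blast
      qed
      then obtain G2 where G2: "finite G2" "G2 \<subseteq> M" "S \<inter> \<Inter>G2 \<inter> (S - A) = {}" by blast
      have "S \<inter> \<Inter>(G1 \<union> G2) \<noteq> {}" by (rule fipD[OF Mf]) (use G1 G2 in auto)
      moreover have "S \<inter> \<Inter>(G1 \<union> G2) = {}" using G1(3) G2(3) by blast
      ultimately show False by blast
    qed
  qed
  then show ?thesis using MB by blast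
qed



definition hat :: "real set \<Rightarrow> real set \<Rightarrow> real set set set" where
  "hat S A = {p \<in> betaS S. A \<in> p}"

definition clo :: "real set \<Rightarrow> real set set set \<Rightarrow> real set set set" where
  "clo S X = {p \<in> betaS S. \<forall>A\<in>p. \<exists>x\<in>X. A \<in> x}"

lemma betaS_iff: "p \<in> betaS S \<longleftrightarrow> ultrafilter_on S p"
  by (simp add: betaS_def)

lemma topspace_beta: "topspace (betaTop S) = betaS S"
proof -
  have "\<Union>{{p \<in> betaS S. A \<in> p} | A. A \<subseteq> S} = betaS S"
  proof
    show "betaS S \<subseteq> \<Union>{{p \<in> betaS S. A \<in> p} | A. A \<subseteq> S}"
    proof
      fix p assume p: "p \<in> betaS S"
      then have "p \<in> {q \<in> betaS S. S \<in> q}" using uf_S betaS_iff by blast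
      moreover have "{q \<in> betaS S. S \<in> q} \<in> {{p \<in> betaS S. A \<in> p} | A. A \<subseteq> S}" by auto
      ultimately show "p \<in> \<Union>{{p \<in> betaS S. A \<in> p} | A. A \<subseteq> S}" by (rule UnionI[rotated])
    qed
  qed auto
  then show ?thesis unfolding betaTop_def topology_generated_by_topspace by simp
qed

lemma open_hat: "A \<subseteq> S \<Longrightarrow> openin (betaTop S) (hat S A)"
  unfolding betaTop_def openin_topology_generated_by_iff hat_def
  by (rule generate_topology_on.Basis) auto

lemma hat_Int: assumes "A \<subseteq> S" "B \<subseteq> S" shows "hat S (A \<inter> B) \<subseteq> hat S A \<inter> hat S B"
proof
  fix q assume "q \<in> hat S (A \<inter> B)"
  then have q: "ultrafilter_on S q" "A \<inter> B \<in> q" by (auto simp: hat_def betaS_iff)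
  have "A \<in> q" by (rule uf_mono[OF q(1,2)]) (use assms in auto)
  moreover have "B \<in> q" by (rule uf_mono[OF q(1,2)]) (use assms in auto)
  ultimately show "q \<in> hat S A \<inter> hat S B" using q by (auto simp: hat_def betaS_iff)
qed

lemma open_basic_aux:
  "generate_topology_on {{p \<in> betaS S. A \<in> p} | A. A \<subseteq> S} U \<Longrightarrow>
   \<forall>p\<in>U. p \<in> betaS S \<and> (\<exists>A. A \<in> p \<and> hat S A \<subseteq> U)"
proof (induction rule: generate_topology_on.induct)
  case Empty then show ?case by simp
next
  case (Int a b)
  show ?case
  proof
    fix p assume p: "p \<in> a \<inter> b"
    then obtain A B where A: "A \<in> p" "hat S A \<subseteq> a" and B: "B \<in> p" "hat S B \<subseteq> b" and pb: "p \<in> betaS S"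
      using Int.IH by blast
    have u: "ultrafilter_on S p" using pb betaS_iff by blast
    have "A \<inter> B \<in> p" using uf_Int[OF u A(1) B(1)] .
    moreover have "hat S (A \<inter> B) \<subseteq> a \<inter> b" using hat_Int[OF uf_sub[OF u A(1)] uf_sub[OF u B(1)]] A B by blast
    ultimately show "p \<in> betaS S \<and> (\<exists>A. A \<in> p \<and> hat S A \<subseteq> a \<inter> b)" using pb by blast
  qed
next
  case (UN K)
  show ?case
  proof
    fix p assume "p \<in> \<Union>K"
    then obtain k where "k \<in> K" "p \<in> k" by blast
    then have "p \<in> betaS S \<and> (\<exists>A. A \<in> p \<and> hat S A \<subseteq> k)" using UN.IH[OF \<open>k \<in> K\<close>] by blast
    then obtain A where "p \<in> betaS S" "A \<in> p" "hat S A \<subseteq> k" by blast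
    then show "p \<in> betaS S \<and> (\<exists>A. A \<in> p \<and> hat S A \<subseteq> \<Union>K)" using \<open>k \<in> K\<close> by blast
  qed
next
  case (Basis s)
  then obtain A where "s = {p \<in> betaS S. A \<in> p}" by blast
  then have s: "s = hat S A" by (simp add: hat_def)
  show ?case
  proof
    fix p assume "p \<in> s"
    then have "p \<in> betaS S" "A \<in> p" unfolding s hat_def by auto
    then show "p \<in> betaS S \<and> (\<exists>A. A \<in> p \<and> hat S A \<subseteq> s)" using s by blast
  qed
qed

lemma open_basic: assumes "openin (betaTop S) U" "p \<in> U" shows "p \<in> betaS S \<and> (\<exists>A. A \<in> p \<and> hat S A \<subseteq> U)"
proof -
  have "generate_topology_on {{p \<in> betaS S. A \<in> p} | A. A \<subseteq> S} U"
    using assms(1) unfolding betaTop_def openin_topology_generated_by_iff .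
  from bspec[OF open_basic_aux[OF this] assms(2)] show ?thesis .
qed

lemma closure_eq: assumes XS: "X \<subseteq> betaS S" shows "betaTop S closure_of X = clo S X"
proof
  show "betaTop S closure_of X \<subseteq> clo S X"
  proof
    fix p assume p: "p \<in> betaTop S closure_of X"
    have "p \<in> topspace (betaTop S)" using subsetD[OF closure_of_subset_topspace p] .
    then have pb: "p \<in> betaS S" by (simp add: topspace_beta)
    have "\<exists>x\<in>X. A \<in> x" if A: "A \<in> p" for A
    proof -
      have "A \<subseteq> S" using uf_sub[OF pb[unfolded betaS_iff] A] .
      then have "openin (betaTop S) (hat S A)" by (rule open_hat)
      moreover have "p \<in> hat S A" using pb A by (simp add: hat_def)
      ultimately obtain y where "y \<in> X" "y \<in> hat S A" using p unfolding in_closure_of by blast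
      then show ?thesis unfolding hat_def by blast
    qed
    then show "p \<in> clo S X" using pb by (simp add: clo_def)
  qed
next
  show "clo S X \<subseteq> betaTop S closure_of X"
  proof
    fix p assume p: "p \<in> clo S X"
    show "p \<in> betaTop S closure_of X"
      unfolding in_closure_of topspace_beta
    proof (intro conjI allI impI)
      show "p \<in> betaS S" using p by (simp add: clo_def)
      fix T assume T: "p \<in> T \<and> openin (betaTop S) T"
      then obtain A where A: "A \<in> p" "hat S A \<subseteq> T" using open_basic by blast
      then obtain x where "x \<in> X" "A \<in> x" using p by (auto simp: clo_def)
      moreover have "x \<in> betaS S" using XS \<open>x \<in> X\<close> by blast
      ultimately show "\<exists>y. y \<in> X \<and> y \<in> T" using A by (auto simp: hat_def)
    qed
  qed
qed

lemma clo_sub_beta: "clo S X \<subseteq> betaS S"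
  by (auto simp: clo_def)

lemma clo_mono: "X \<subseteq> Y \<Longrightarrow> clo S X \<subseteq> clo S Y"
  by (auto simp: clo_def) blast

lemma clo_clo: "clo S (clo S X) \<subseteq> clo S X"
proof
  fix p assume p: "p \<in> clo S (clo S X)"
  show "p \<in> clo S X" unfolding clo_def
  proof (intro CollectI conjI ballI)
    show "p \<in> betaS S" using p by (simp add: clo_def)
    fix A assume "A \<in> p"
    then obtain x where "x \<in> clo S X" "A \<in> x" using p by (auto simp: clo_def)
    then show "\<exists>y\<in>X. A \<in> y" by (auto simp: clo_def)
  qed
qed

lemma sub_clo: "X \<subseteq> betaS S \<Longrightarrow> X \<subseteq> clo S X"
  by (auto simp: clo_def)

lemma closed_fip:
  assumes cl: "clo S X \<subseteq> X" and B: "\<B> \<subseteq> Pow S"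
    and f: "\<And>F. finite F \<Longrightarrow> F \<subseteq> \<B> \<Longrightarrow> \<exists>p\<in>X. F \<subseteq> p" and XS: "X \<subseteq> betaS S"
  shows "\<exists>v\<in>X. \<B> \<subseteq> v"
proof -
  define \<B>' where "\<B>' = \<B> \<union> {B. B \<subseteq> S \<and> X \<subseteq> hat S B}"
  have "fip S \<B>'" unfolding fip_def
  proof (intro allI impI)
    fix F assume F: "finite F \<and> F \<subseteq> \<B>'"
    have "finite (F \<inter> \<B>)" using F by simp
    then obtain p where p: "p \<in> X" "F \<inter> \<B> \<subseteq> p" using f[of "F \<inter> \<B>"] by blast
    have u: "ultrafilter_on S p" using p(1) XS betaS_iff by blast
    have "F \<subseteq> p"
    proof
      fix B assume BF: "B \<in> F"
      show "B \<in> p"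
      proof (cases "B \<in> \<B>")
        case True then show ?thesis using p BF by blast
      next
        case False then have "X \<subseteq> hat S B" using F BF \<B>'_def by blast
        then show ?thesis using p(1) by (auto simp: hat_def)
      qed
    qed
    then have "S \<inter> \<Inter>F \<in> p" using uf_Inter[OF u] F by blast
    then show "S \<inter> \<Inter>F \<noteq> {}" using uf_empty[OF u] by force
  qed
  moreover have "\<B>' \<subseteq> Pow S" using B \<B>'_def by blast
  ultimately obtain v where v: "ultrafilter_on S v" "\<B>' \<subseteq> v" using uf_extend by blast
  have "v \<in> clo S X"
    unfolding clo_def
  proof (intro CollectI conjI ballI)
    show "v \<in> betaS S" using v betaS_iff by blast
    fix A assume A: "A \<in> v"
    show "\<exists>x\<in>X. A \<in> x"
    proof (rule ccontr)
      assume n: "\<not> (\<exists>x\<in>X. A \<in> x)"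
      have AS: "A \<subseteq> S" using uf_sub[OF v(1) A] .
      have "X \<subseteq> hat S (S - A)"
      proof
        fix x assume xX: "x \<in> X"
        then have ux: "ultrafilter_on S x" using XS betaS_iff by blast
        have "A \<notin> x" using n xX by blast
        then have "S - A \<in> x" using uf_compl[OF ux AS] by blast
        then show "x \<in> hat S (S - A)" using xX XS by (auto simp: hat_def)
      qed
      then have "S - A \<in> \<B>'" unfolding \<B>'_def by blast
      then have "S - A \<in> v" using v by blast
      then show False using uf_compl2[OF v(1) A] by blast
    qed
  qed
  then show ?thesis using cl v \<B>'_def by blast
qed

lemma basic_cover:
  assumes cl: "clo S X \<subseteq> X" "X \<subseteq> betaS S" and cov: "X \<subseteq> (\<Union>i\<in>I. hat S (A i))"
    and AS: "\<And>i. i \<in> I \<Longrightarrow> A i \<subseteq> S"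
  shows "\<exists>I'. finite I' \<and> I' \<subseteq> I \<and> X \<subseteq> (\<Union>i\<in>I'. hat S (A i))"
proof (rule ccontr)
  assume n: "\<not> (\<exists>I'. finite I' \<and> I' \<subseteq> I \<and> X \<subseteq> (\<Union>i\<in>I'. hat S (A i)))"
  have "\<exists>v\<in>X. (\<lambda>i. S - A i) ` I \<subseteq> v"
  proof (rule closed_fip[OF cl(1) _ _ cl(2)])
    show "(\<lambda>i. S - A i) ` I \<subseteq> Pow S" by blast
    fix F assume F: "finite F" "F \<subseteq> (\<lambda>i. S - A i) ` I"
    obtain I' where I': "I' \<subseteq> I" "finite I'" "F = (\<lambda>i. S - A i) ` I'"
      using finite_subset_image[OF F(1) F(2)] by blast
    then obtain p where p: "p \<in> X" "p \<notin> (\<Union>i\<in>I'. hat S (A i))" using n by blast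
    have u: "ultrafilter_on S p" using p(1) cl(2) betaS_iff by blast
    have "F \<subseteq> p"
    proof
      fix B assume "B \<in> F"
      then obtain i where i: "i \<in> I'" "B = S - A i" using I' by blast
      have "A i \<notin> p" using p(2) i(1) cl(2) p(1) by (auto simp: hat_def)
      then show "B \<in> p" using uf_compl[OF u AS] i I'(1) by blast
    qed
    then show "\<exists>p\<in>X. F \<subseteq> p" using p by blast
  qed
  then obtain v where v: "v \<in> X" "(\<lambda>i. S - A i) ` I \<subseteq> v" by blast
  then obtain i where i: "i \<in> I" "v \<in> hat S (A i)" using cov by blast
  then have "A i \<in> v" "ultrafilter_on S v" by (auto simp: hat_def betaS_iff)
  moreover have "S - A i \<in> v" using v(2) i(1) by blast
  ultimately show False using uf_compl2 by blast
qed

lemma compact_clo: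
  assumes cl: "clo S X \<subseteq> X" and XS: "X \<subseteq> betaS S"
  shows "compactin (betaTop S) X"
  unfolding compactin_def
proof (intro conjI allI impI)
  show "X \<subseteq> topspace (betaTop S)" using XS by (simp add: topspace_beta)
  fix \<U> assume U0: "(\<forall>U\<in>\<U>. openin (betaTop S) U) \<and> X \<subseteq> \<Union>\<U>"
  have Uo: "\<And>U. U \<in> \<U> \<Longrightarrow> openin (betaTop S) U" using U0 by simp
  have UX: "X \<subseteq> \<Union>\<U>" using U0 by simp
  have "\<forall>p\<in>X. \<exists>UA. fst UA \<in> \<U> \<and> snd UA \<in> p \<and> hat S (snd UA) \<subseteq> fst UA"
  proof
    fix p assume "p \<in> X"
    then have "p \<in> \<Union>\<U>" by (rule subsetD[OF UX])
    then obtain U where "U \<in> \<U>" "p \<in> U" by (rule UnionE)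
    then obtain A where "A \<in> p" "hat S A \<subseteq> U" using open_basic[OF Uo] by blast
    then show "\<exists>UA. fst UA \<in> \<U> \<and> snd UA \<in> p \<and> hat S (snd UA) \<subseteq> fst UA"
      using \<open>U \<in> \<U>\<close> by (intro exI[of _ "(U, A)"]) simp
  qed
  then obtain g where g: "\<And>p. p \<in> X \<Longrightarrow> fst (g p) \<in> \<U> \<and> snd (g p) \<in> p \<and> hat S (snd (g p)) \<subseteq> fst (g p)"
    using bchoice by metis
  have cov: "X \<subseteq> (\<Union>p\<in>X. hat S (snd (g p)))"
  proof
    fix p assume "p \<in> X"
    then have "p \<in> hat S (snd (g p))" using g XS by (auto simp: hat_def)
    then show "p \<in> (\<Union>p\<in>X. hat S (snd (g p)))" using \<open>p \<in> X\<close> by blast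
  qed
  have AS: "snd (g p) \<subseteq> S" if "p \<in> X" for p
    using uf_sub g[OF that] XS that betaS_iff by blast
  obtain P where P: "finite P" "P \<subseteq> X" "X \<subseteq> (\<Union>p\<in>P. hat S (snd (g p)))"
    using basic_cover[OF cl XS cov AS] by blast
  show "\<exists>\<F>. finite \<F> \<and> \<F> \<subseteq> \<U> \<and> X \<subseteq> \<Union>\<F>"
  proof (intro exI conjI)
    show "finite ((\<lambda>p. fst (g p)) ` P)" using P by simp
    show "(\<lambda>p. fst (g p)) ` P \<subseteq> \<U>" using P g by blast
    show "X \<subseteq> \<Union>((\<lambda>p. fst (g p)) ` P)" using P g by blast
  qed
qed



lemma ltrans_sub: "ltrans S x A \<subseteq> S"
  by (auto simp: ltrans_def)

lemma ltrans_mono: "A \<subseteq> B \<Longrightarrow> ltrans S x A \<subseteq> ltrans S x B"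
  by (auto simp: ltrans_def)

lemma ltrans_Int: "ltrans S x (A \<inter> B) = ltrans S x A \<inter> ltrans S x B"
  by (auto simp: ltrans_def)

lemma ltrans_empty: "ltrans S x {} = {}"
  by (auto simp: ltrans_def)

lemma mem_bplus: "A \<in> bplus S p q \<longleftrightarrow> A \<subseteq> S \<and> {x \<in> S. ltrans S x A \<in> q} \<in> p"
  by (simp add: bplus_def)

lemma fin_pos: "finite E \<Longrightarrow> E \<subseteq> {0<..} \<Longrightarrow> \<exists>m>0. \<forall>e\<in>E. m \<le> (e::real)"
proof (induction E rule: finite_induct)
  case empty then show ?case by (intro exI[of _ 1]) auto
next
  case (insert x F)
  then obtain m where "m > 0" "\<forall>e\<in>F. m \<le> e" by auto
  then show ?case using insert(4) by (intro exI[of _ "min m x"]) auto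
qed

locale dss =
  fixes S :: "real set"
  assumes dss: "dense_subsemigroup S"
begin

lemma S_pos: "x \<in> S \<Longrightarrow> 0 < x"
  using dss by (auto simp: dense_subsemigroup_def)

lemma S_add: "x \<in> S \<Longrightarrow> y \<in> S \<Longrightarrow> x + y \<in> S"
  using dss by (auto simp: dense_subsemigroup_def)

lemma S_dense: "0 < a \<Longrightarrow> a < b \<Longrightarrow> \<exists>s\<in>S. a < s \<and> s < b"
  using dss by (auto simp: dense_subsemigroup_def)

lemma S_small: "0 < e \<Longrightarrow> \<exists>s\<in>S. s < e"
  using S_dense[of "e/2" e] by auto

lemma S_ne: "S \<noteq> {}"
  using S_small[of 1] by auto

lemma ltrans_S: "x \<in> S \<Longrightarrow> ltrans S x S = S"
  using S_add by (auto simp: ltrans_def)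

lemma ltrans_compl: "x \<in> S \<Longrightarrow> ltrans S x (S - A) = S - ltrans S x A"
  using S_add by (auto simp: ltrans_def)

lemma ltrans_ltrans: "y \<in> S \<Longrightarrow> z \<in> S \<Longrightarrow> ltrans S z (ltrans S y A) = ltrans S (y + z) A"
  using S_add by (auto simp: ltrans_def add.assoc)

lemma bplus_uf:
  assumes p: "ultrafilter_on S p" and q: "ultrafilter_on S q"
  shows "ultrafilter_on S (bplus S p q)"
proof -
  define X where "X A = {x \<in> S. ltrans S x A \<in> q}" for A
  have mem: "A \<in> bplus S p q \<longleftrightarrow> A \<subseteq> S \<and> X A \<in> p" for A
    by (simp add: bplus_def X_def)
  have XS: "X S = S" using ltrans_S uf_S[OF q] by (auto simp: X_def)
  have Xe: "X {} = {}" using uf_empty[OF q] by (auto simp: X_def ltrans_empty)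
  have XI: "X (A \<inter> B) = X A \<inter> X B" for A B
  proof -
    have "ltrans S x A \<inter> ltrans S x B \<in> q \<longleftrightarrow> ltrans S x A \<in> q \<and> ltrans S x B \<in> q" for x
    proof
      assume h: "ltrans S x A \<inter> ltrans S x B \<in> q"
      show "ltrans S x A \<in> q \<and> ltrans S x B \<in> q"
        using uf_mono[OF q h _ ltrans_sub] by blast
    qed (use uf_Int[OF q] in blast)
    then show ?thesis by (auto simp: X_def ltrans_Int)
  qed
  have Xm: "X A \<subseteq> X B" if AB: "A \<subseteq> B" for A B
  proof
    fix x assume "x \<in> X A"
    then have x: "x \<in> S" "ltrans S x A \<in> q" by (auto simp: X_def)
    have "ltrans S x B \<in> q" by (rule uf_mono[OF q x(2) ltrans_mono[OF AB] ltrans_sub])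
    then show "x \<in> X B" using x(1) by (simp add: X_def)
  qed
  have Xc: "X (S - A) = S - X A" for A
  proof -
    have "x \<in> S \<Longrightarrow> (S - ltrans S x A \<in> q \<longleftrightarrow> ltrans S x A \<notin> q)" for x
      by (meson uf_compl[OF q ltrans_sub] uf_compl2[OF q])
    then show ?thesis by (auto simp: X_def ltrans_compl)
  qed
  have XsubS: "X A \<subseteq> S" for A by (auto simp: X_def)
  show ?thesis
    unfolding ultrafilter_on_def filter_on_def
  proof (intro conjI ballI allI impI)
    show "bplus S p q \<subseteq> Pow S" by (auto simp: bplus_def)
    show "S \<in> bplus S p q" using mem XS uf_S[OF p] by simp
    show "{} \<notin> bplus S p q" using mem Xe uf_empty[OF p] by simp
    fix A B assume "A \<in> bplus S p q" "B \<in> bplus S p q"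
    then show "A \<inter> B \<in> bplus S p q" using mem XI uf_Int[OF p] by auto
  next
    fix A B assume A: "A \<in> bplus S p q" and AB: "A \<subseteq> B \<and> B \<subseteq> S"
    then have "X A \<in> p" using mem by simp
    then have "X B \<in> p" using uf_mono[OF p _ Xm[of A B] XsubS] AB by blast
    then show "B \<in> bplus S p q" using mem AB by simp
  next
    fix A assume AS: "A \<subseteq> S"
    show "A \<in> bplus S p q \<or> S - A \<in> bplus S p q"
    proof (cases "X A \<in> p")
      case True then show ?thesis using mem AS by simp
    next
      case False
      then have "S - X A \<in> p" using uf_compl[OF p XsubS] by simp
      then show ?thesis using mem Xc by simp
    qed
  qed
qed

lemma bplus_beta: "p \<in> betaS S \<Longrightarrow> q \<in> betaS S \<Longrightarrow> bplus S p q \<in> betaS S"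
  using bplus_uf by (simp add: betaS_iff)

lemma bplus_assoc:
  assumes p: "p \<in> betaS S" and q: "q \<in> betaS S" and r: "r \<in> betaS S"
  shows "bplus S (bplus S p q) r = bplus S p (bplus S q r)"
proof -
  have "A \<in> bplus S (bplus S p q) r \<longleftrightarrow> A \<in> bplus S p (bplus S q r)" for A
  proof -
    have eq: "{y \<in> S. ltrans S y A \<in> bplus S q r} = {y \<in> S. ltrans S y {x \<in> S. ltrans S x A \<in> r} \<in> q}"
    proof -
      have "ltrans S y A \<in> bplus S q r \<longleftrightarrow> ltrans S y {x \<in> S. ltrans S x A \<in> r} \<in> q" if y: "y \<in> S" for y
      proof -
        have "{x \<in> S. ltrans S x (ltrans S y A) \<in> r} = ltrans S y {x \<in> S. ltrans S x A \<in> r}"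
          using ltrans_ltrans[OF y] S_add[OF y] by (auto simp: ltrans_def)
        then show ?thesis by (simp add: bplus_def ltrans_sub)
      qed
      then show ?thesis by blast
    qed
    have l: "A \<in> bplus S (bplus S p q) r \<longleftrightarrow> A \<subseteq> S \<and> {y \<in> S. ltrans S y {x \<in> S. ltrans S x A \<in> r} \<in> q} \<in> p"
      unfolding mem_bplus[of A S "bplus S p q" r] mem_bplus[of _ S p q] by auto
    have rr: "A \<in> bplus S p (bplus S q r) \<longleftrightarrow> A \<subseteq> S \<and> {y \<in> S. ltrans S y A \<in> bplus S q r} \<in> p"
      by (rule mem_bplus)
    show ?thesis unfolding l rr eq ..
  qed
  then show ?thesis by blast
qed


abbreviation Op :: "real set set set" where "Op \<equiv> Oplus S"

lemma Oplus_sub: "Op \<subseteq> betaS S"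
  by (auto simp: Oplus_def)

lemma Oplus_uf: "p \<in> Op \<Longrightarrow> ultrafilter_on S p"
  by (auto simp: Oplus_def betaS_iff)

lemma Oplus_mem: "p \<in> Op \<Longrightarrow> 0 < e \<Longrightarrow> S \<inter> {0<..<e} \<in> p"
  by (auto simp: Oplus_def)

lemma Oplus_closed: "clo S Op \<subseteq> Op"
proof
  fix p assume p: "p \<in> clo S Op"
  then have pb: "p \<in> betaS S" and u: "ultrafilter_on S p" by (auto simp: clo_def betaS_iff)
  have "S \<inter> {0<..<e} \<in> p" if e: "e > 0" for e
  proof (rule ccontr)
    assume "S \<inter> {0<..<e} \<notin> p"
    then have "S - S \<inter> {0<..<e} \<in> p" using uf_compl[OF u] by blast
    then obtain x where x: "x \<in> Op" "S - S \<inter> {0<..<e} \<in> x" using p by (auto simp: clo_def)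
    have "(S - S \<inter> {0<..<e}) \<inter> (S \<inter> {0<..<e}) \<in> x"
      using uf_Int[OF Oplus_uf[OF x(1)] x(2) Oplus_mem[OF x(1) e]] .
    moreover have "(S - S \<inter> {0<..<e}) \<inter> (S \<inter> {0<..<e}) = {}" by blast
    ultimately show False using uf_empty[OF Oplus_uf[OF x(1)]] by simp
  qed
  then show "p \<in> Op" using pb by (simp add: Oplus_def)
qed

lemma fip_small:
  assumes "\<And>e. e > 0 \<Longrightarrow> \<exists>x\<in>S. x < e \<and> x \<notin> D"
  shows "fip S ((\<lambda>e. S \<inter> {0<..<e} - D) ` {0<..})"
  unfolding fip_def
proof (intro allI impI)
  fix F assume F: "finite F \<and> F \<subseteq> (\<lambda>e. S \<inter> {0<..<e} - D) ` {0<..}"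
  then obtain E where E: "E \<subseteq> {0<..}" "finite E" "F = (\<lambda>e. S \<inter> {0<..<e} - D) ` E"
    using finite_subset_image[of F "\<lambda>e. S \<inter> {0<..<e} - D" "{0<..}"] by blast
  obtain m where m: "m > 0" "\<forall>e\<in>E. m \<le> e" using fin_pos[OF E(2) E(1)] by blast
  obtain x where x: "x \<in> S" "x < m" "x \<notin> D" using assms[OF m(1)] by blast
  have "x \<in> S \<inter> \<Inter>F" using E m x S_pos[OF x(1)] by auto
  then show "S \<inter> \<Inter>F \<noteq> {}" by blast
qed

lemma Oplus_ne: "Op \<noteq> {}"
proof -
  have f: "fip S ((\<lambda>e. S \<inter> {0<..<e} - {}) ` {0<..})"
    by (rule fip_small) (use S_small in auto)
  have P: "(\<lambda>e. S \<inter> {0<..<e} - {}) ` {0<..} \<subseteq> Pow S" by (intro image_subsetI) blast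
  obtain p where p: "ultrafilter_on S p" "(\<lambda>e. S \<inter> {0<..<e} - {}) ` {0<..} \<subseteq> p"
    using uf_extend[OF P f] by blast
  have "S \<inter> {0<..<e} \<in> p" if "e > 0" for e
    using p(2) that by auto
  then have "p \<in> Op" using p(1) by (auto simp: Oplus_def betaS_iff)
  then show ?thesis by blast
qed

lemma small_in:
  assumes D: "\<And>v. v \<in> Op \<Longrightarrow> D \<in> v"
  shows "\<exists>\<delta>>0. S \<inter> {0<..<\<delta>} \<subseteq> D"
proof (rule ccontr)
  assume n: "\<not> (\<exists>\<delta>>0. S \<inter> {0<..<\<delta>} \<subseteq> D)"
  have "\<exists>x\<in>S. x < e \<and> x \<notin> D" if "e > 0" for e
  proof -
    have "\<not> S \<inter> {0<..<e} \<subseteq> D" using n that by blast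
    then obtain x where "x \<in> S \<inter> {0<..<e}" "x \<notin> D" by blast
    then show ?thesis by auto
  qed
  then have f: "fip S ((\<lambda>e. S \<inter> {0<..<e} - D) ` {0<..})" by (rule fip_small)
  have P: "(\<lambda>e. S \<inter> {0<..<e} - D) ` {0<..} \<subseteq> Pow S" by (intro image_subsetI) blast
  obtain v where v: "ultrafilter_on S v" "(\<lambda>e. S \<inter> {0<..<e} - D) ` {0<..} \<subseteq> v"
    using uf_extend[OF P f] by blast
  have vm: "S \<inter> {0<..<e} - D \<in> v" if "e > 0" for e
    using v(2) that by auto
  have "S \<inter> {0<..<e} \<in> v" if "e > 0" for e
    by (rule uf_mono[OF v(1) vm[OF that]]) auto
  then have "v \<in> Op" using v(1) by (auto simp: Oplus_def betaS_iff)
  then have "D \<in> v" by (rule D)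
  moreover have "S \<inter> {0<..<1} - D \<in> v" using vm[of 1] by simp
  ultimately have "D \<inter> (S \<inter> {0<..<1} - D) \<in> v" using uf_Int[OF v(1)] by blast
  moreover have "D \<inter> (S \<inter> {0<..<1} - D) = {}" by blast
  ultimately show False using uf_empty[OF v(1)] by simp
qed

lemma Oplus_add:
  assumes p: "p \<in> Op" and q: "q \<in> Op"
  shows "bplus S p q \<in> Op"
proof -
  have pq: "bplus S p q \<in> betaS S" using bplus_beta p q Oplus_sub by blast
  have "S \<inter> {0<..<e} \<in> bplus S p q" if e: "e > 0" for e
  proof -
    have sub: "S \<inter> {0<..<e/2} \<subseteq> {x \<in> S. ltrans S x (S \<inter> {0<..<e}) \<in> q}"
    proof
      fix x assume x: "x \<in> S \<inter> {0<..<e/2}"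
      have "S \<inter> {0<..<e/2} \<subseteq> ltrans S x (S \<inter> {0<..<e})"
        using x S_add S_pos by (auto simp: ltrans_def)
      moreover have h: "0 < e/2" using e by simp
      ultimately have "ltrans S x (S \<inter> {0<..<e}) \<in> q"
        using uf_mono[OF Oplus_uf[OF q] Oplus_mem[OF q h] _ ltrans_sub] by blast
      then show "x \<in> {x \<in> S. ltrans S x (S \<inter> {0<..<e}) \<in> q}" using x by simp
    qed
    have h: "0 < e/2" using e by simp
    have "{x \<in> S. ltrans S x (S \<inter> {0<..<e}) \<in> q} \<in> p"
      using uf_mono[OF Oplus_uf[OF p] Oplus_mem[OF p h] sub] by blast
    then show ?thesis by (simp add: mem_bplus)
  qed
  then show ?thesis using pq by (simp add: Oplus_def)
qed

lemma Oplus_assoc: "p \<in> Op \<Longrightarrow> q \<in> Op \<Longrightarrow> r \<in> Op \<Longrightarrow>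
    bplus S (bplus S p q) r = bplus S p (bplus S q r)"
  using bplus_assoc Oplus_sub by blast

definition LI :: "real set set set \<Rightarrow> bool" where
  "LI L \<longleftrightarrow> L \<noteq> {} \<and> L \<subseteq> Op \<and> (\<forall>p\<in>Op. \<forall>q\<in>L. bplus S p q \<in> L)"

definition minLI :: "real set set set \<Rightarrow> bool" where
  "minLI L \<longleftrightarrow> LI L \<and> (\<forall>L'. LI L' \<and> L' \<subseteq> L \<longrightarrow> L' = L)"

definition rt :: "real set set \<Rightarrow> real set set set" where
  "rt q = (\<lambda>p. bplus S p q) ` Op"

lemma rt_LI: assumes q: "q \<in> Op" shows "LI (rt q)"
  unfolding LI_def
proof (intro conjI ballI)
  show "rt q \<noteq> {}" using Oplus_ne by (simp add: rt_def)
  show "rt q \<subseteq> Op" using Oplus_add q by (auto simp: rt_def)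
  fix p r assume p: "p \<in> Op" and r: "r \<in> rt q"
  then obtain u where u: "u \<in> Op" "r = bplus S u q" by (auto simp: rt_def)
  have "bplus S p r = bplus S (bplus S p u) q" using Oplus_assoc[OF p u(1) q] u by simp
  then show "bplus S p r \<in> rt q" using Oplus_add[OF p u(1)] by (simp add: rt_def)
qed

lemma rt_closed: assumes q: "q \<in> Op" shows "clo S (rt q) \<subseteq> rt q"
proof
  fix v assume v: "v \<in> clo S (rt q)"
  then have uv: "ultrafilter_on S v" by (auto simp: clo_def betaS_iff)
  define g where "g A = {x \<in> S. ltrans S x A \<in> q}" for A
  have gm: "g A \<subseteq> g B" if "A \<subseteq> B" for A B
    using uf_mono[OF Oplus_uf[OF q] _ ltrans_mono[OF that] ltrans_sub] by (auto simp: g_def)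
  have "\<exists>u\<in>Op. g ` v \<subseteq> u"
  proof (rule closed_fip[OF Oplus_closed _ _ Oplus_sub])
    show "g ` v \<subseteq> Pow S" by (auto simp: g_def)
    fix F assume F: "finite F" "F \<subseteq> g ` v"
    obtain F' where F': "F' \<subseteq> v" "finite F'" "F = g ` F'"
      using finite_subset_image[OF F] by blast
    have A0: "S \<inter> \<Inter>F' \<in> v" using uf_Inter[OF uv F'(2) F'(1)] .
    then obtain x where x: "x \<in> rt q" "S \<inter> \<Inter>F' \<in> x" using v by (auto simp: clo_def)
    then obtain u where u: "u \<in> Op" "x = bplus S u q" by (auto simp: rt_def)
    have gu: "g (S \<inter> \<Inter>F') \<in> u" using x(2) u(2) by (simp add: mem_bplus g_def)
    have "F \<subseteq> u"
    proof
      fix B assume "B \<in> F"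
      then obtain A where A: "A \<in> F'" "B = g A" using F' by blast
      have "g (S \<inter> \<Inter>F') \<subseteq> g A" using A(1) by (intro gm) auto
      then show "B \<in> u" using uf_mono[OF Oplus_uf[OF u(1)] gu] A by (auto simp: g_def)
    qed
    then show "\<exists>p\<in>Op. F \<subseteq> p" using u(1) by blast
  qed
  then obtain u where u: "u \<in> Op" "g ` v \<subseteq> u" by blast
  have "v \<subseteq> bplus S u q"
  proof
    fix A assume "A \<in> v"
    then have "A \<subseteq> S" "g A \<in> u" using uf_sub[OF uv] u(2) by auto
    then show "A \<in> bplus S u q" by (simp add: mem_bplus g_def)
  qed
  then have "v = bplus S u q"
    using uf_eq[OF uv] Oplus_uf[OF Oplus_add[OF u(1) q]] by blast
  then show "v \<in> rt q" using u(1) by (simp add: rt_def)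
qed


lemma LI_Op: "LI Op"
  using Oplus_ne Oplus_add by (auto simp: LI_def)

lemma chain_min:
  assumes ch: "\<forall>a\<in>C. \<forall>b\<in>C. a \<subseteq> b \<or> b \<subseteq> a"
  shows "finite \<L> \<Longrightarrow> \<L> \<noteq> {} \<Longrightarrow> \<L> \<subseteq> C \<Longrightarrow> \<exists>L\<in>\<L>. \<forall>L'\<in>\<L>. L \<subseteq> L'"
proof (induction \<L> rule: finite_ne_induct)
  case (singleton x) then show ?case by auto
next
  case (insert x F)
  then obtain L where L: "L \<in> F" "\<forall>L'\<in>F. L \<subseteq> L'" by auto
  have "x \<subseteq> L \<or> L \<subseteq> x" using ch insert(5) L(1) by blast
  then show ?case
  proof
    assume "x \<subseteq> L" then show ?thesis using L by (intro bexI[of _ x]) auto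
  next
    assume "L \<subseteq> x" then show ?thesis using L by (intro bexI[of _ L]) auto
  qed
qed

lemma chain_Inter:
  assumes Cne: "C \<noteq> {}" and CL: "\<And>L. L \<in> C \<Longrightarrow> LI L \<and> clo S L \<subseteq> L"
    and ch: "\<forall>a\<in>C. \<forall>b\<in>C. a \<subseteq> b \<or> b \<subseteq> a"
  shows "LI (\<Inter>C) \<and> clo S (\<Inter>C) \<subseteq> \<Inter>C"
proof -
  define \<B> where "\<B> = {B. B \<subseteq> S \<and> (\<exists>L\<in>C. L \<subseteq> hat S B)}"
  have "\<exists>v\<in>Op. \<B> \<subseteq> v"
  proof (rule closed_fip[OF Oplus_closed _ _ Oplus_sub])
    show "\<B> \<subseteq> Pow S" by (auto simp: \<B>_def)
    fix F assume F: "finite F" "F \<subseteq> \<B>"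
    have "\<forall>B\<in>F. \<exists>L. L \<in> C \<and> L \<subseteq> hat S B" using F(2) by (auto simp: \<B>_def)
    then obtain h where h: "\<And>B. B \<in> F \<Longrightarrow> h B \<in> C \<and> h B \<subseteq> hat S B" by metis
    show "\<exists>p\<in>Op. F \<subseteq> p"
    proof (cases "F = {}")
      case True then show ?thesis using Oplus_ne by blast
    next
      case False
      have "h ` F \<subseteq> C" using h by blast
      then obtain L where L: "L \<in> h ` F" "\<forall>L'\<in>h ` F. L \<subseteq> L'"
        using chain_min[OF ch, of "h ` F"] F(1) False by blast
      then have "L \<in> C" using h by blast
      then have "LI L" using CL by blast
      then obtain p where p: "p \<in> L" "p \<in> Op" by (auto simp: LI_def)
      have "F \<subseteq> p"
      proof
        fix B assume B: "B \<in> F"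
        then have "p \<in> h B" using L p by blast
        then have "p \<in> hat S B" using h[OF B] by blast
        then show "B \<in> p" by (simp add: hat_def)
      qed
      then show ?thesis using p by blast
    qed
  qed
  then obtain v where v: "v \<in> Op" "\<B> \<subseteq> v" by blast
  have uv: "ultrafilter_on S v" using Oplus_uf[OF v(1)] .
  have vL: "v \<in> L" if L: "L \<in> C" for L
  proof -
    have LO: "L \<subseteq> Op" using CL[OF L] by (simp add: LI_def)
    have "v \<in> clo S L"
      unfolding clo_def
    proof (intro CollectI conjI ballI)
      show "v \<in> betaS S" using v Oplus_sub by blast
      fix A assume A: "A \<in> v"
      show "\<exists>x\<in>L. A \<in> x"
      proof (rule ccontr)
        assume n: "\<not> (\<exists>x\<in>L. A \<in> x)"
        have AS: "A \<subseteq> S" using uf_sub[OF uv A] .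
        have "L \<subseteq> hat S (S - A)"
        proof
          fix x assume xL: "x \<in> L"
          then have ux: "ultrafilter_on S x" using LO Oplus_uf by blast
          have "A \<notin> x" using n xL by blast
          then have "S - A \<in> x" using uf_compl[OF ux AS] by blast
          then show "x \<in> hat S (S - A)" using ux by (simp add: hat_def betaS_iff)
        qed
        then have "S - A \<in> \<B>" using L unfolding \<B>_def by blast
        then have "S - A \<in> v" using v by blast
        then show False using uf_compl2[OF uv A] by blast
      qed
    qed
    then show ?thesis using CL[OF L] by blast
  qed
  obtain L0 where L0: "L0 \<in> C" using Cne by blast
  have "LI (\<Inter>C)"
    unfolding LI_def
  proof (intro conjI ballI)
    show "\<Inter>C \<noteq> {}" using vL by blast
    show "\<Inter>C \<subseteq> Op" using CL[OF L0] L0 by (auto simp: LI_def)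
    fix p q assume p: "p \<in> Op" and q: "q \<in> \<Inter>C"
    show "bplus S p q \<in> \<Inter>C"
    proof
      fix L assume "L \<in> C"
      then show "bplus S p q \<in> L" using CL q p by (auto simp: LI_def)
    qed
  qed
  moreover have "clo S (\<Inter>C) \<subseteq> \<Inter>C"
  proof
    fix x assume x: "x \<in> clo S (\<Inter>C)"
    show "x \<in> \<Inter>C"
    proof
      fix L assume L: "L \<in> C"
      have "clo S (\<Inter>C) \<subseteq> clo S L" using L by (intro clo_mono) blast
      then show "x \<in> L" using x CL[OF L] by blast
    qed
  qed
  ultimately show ?thesis by blast
qed

lemma closed_min_exists:
  "\<exists>L. LI L \<and> clo S L \<subseteq> L \<and> (\<forall>L'. LI L' \<and> clo S L' \<subseteq> L' \<and> L' \<subseteq> L \<longrightarrow> L' = L)"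
proof -
  define \<A> where "\<A> = {L. LI L \<and> clo S L \<subseteq> L}"
  have po: "partial_order_on \<A> (relation_of (\<lambda>a b. b \<subseteq> a) \<A>)"
    by (rule partial_order_on_relation_ofI) auto
  have "\<exists>m\<in>\<A>. \<forall>a\<in>\<A>. a \<subseteq> m \<longrightarrow> a = m"
  proof (rule predicate_Zorn[OF po])
    fix C assume C: "C \<in> Chains (relation_of (\<lambda>a b. b \<subseteq> a) \<A>)"
    have CA: "C \<subseteq> \<A>" using C unfolding Chains_def relation_of_def by blast
    have ch: "\<forall>a\<in>C. \<forall>b\<in>C. a \<subseteq> b \<or> b \<subseteq> a" using C unfolding Chains_def relation_of_def by blast
    show "\<exists>u\<in>\<A>. \<forall>a\<in>C. u \<subseteq> a"
    proof (cases "C = {}")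
      case True
      have "Op \<in> \<A>" using LI_Op Oplus_closed by (simp add: \<A>_def)
      show ?thesis
      proof (rule bexI[of _ Op])
        show "\<forall>a\<in>C. Op \<subseteq> a" using True by simp
        show "Op \<in> \<A>" by fact
      qed
    next
      case False
      have CL: "\<And>L. L \<in> C \<Longrightarrow> LI L \<and> clo S L \<subseteq> L" using CA unfolding \<A>_def by blast
      have "LI (\<Inter>C) \<and> clo S (\<Inter>C) \<subseteq> \<Inter>C" by (rule chain_Inter[OF False CL ch])
      then have "\<Inter>C \<in> \<A>" unfolding \<A>_def by blast
      show ?thesis
      proof (rule bexI[of _ "\<Inter>C"])
        show "\<forall>a\<in>C. \<Inter>C \<subseteq> a" by blast
        show "\<Inter>C \<in> \<A>" by fact
      qed
    qed
  qed
  then show ?thesis unfolding \<A>_def by blast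
qed

lemma minLI_exists: "\<exists>L. minLI L"
proof -
  obtain L where L: "LI L" "clo S L \<subseteq> L" and m0: "\<forall>L'. LI L' \<and> clo S L' \<subseteq> L' \<and> L' \<subseteq> L \<longrightarrow> L' = L"
    using closed_min_exists by (elim exE conjE)
  have m: "L' = L" if "LI L'" "clo S L' \<subseteq> L'" "L' \<subseteq> L" for L'
    using m0 that by blast
  have "L' = L" if L': "LI L'" "L' \<subseteq> L" for L'
  proof -
    obtain q where q: "q \<in> L'" using L'(1) by (auto simp: LI_def)
    have qO: "q \<in> Op" using q L'(1) by (auto simp: LI_def)
    have sub: "rt q \<subseteq> L'" using L'(1) q by (auto simp: LI_def rt_def)
    have "rt q = L" using m[OF rt_LI[OF qO] rt_closed[OF qO]] sub L'(2) by blast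
    then show ?thesis using sub L'(2) by blast
  qed
  then show ?thesis using L(1) by (auto simp: minLI_def)
qed

lemma minLI_rt: assumes L: "minLI L" and q: "q \<in> L" shows "rt q = L"
proof -
  have qO: "q \<in> Op" using L q by (auto simp: minLI_def LI_def)
  have "rt q \<subseteq> L" using L q by (auto simp: minLI_def LI_def rt_def)
  then show ?thesis using L rt_LI[OF qO] by (auto simp: minLI_def)
qed

lemma minLI_closed: assumes L: "minLI L" shows "clo S L \<subseteq> L"
proof -
  obtain q where q: "q \<in> L" using L by (auto simp: minLI_def LI_def)
  have qO: "q \<in> Op" using L q by (auto simp: minLI_def LI_def)
  show ?thesis using rt_closed[OF qO] minLI_rt[OF L q] by simp
qed

lemma minLI_trans:
  assumes L: "minLI L" and t: "t \<in> Op"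
  shows "minLI ((\<lambda>p. bplus S p t) ` L)"
proof -
  have LI: "LI L" and LO: "L \<subseteq> Op" using L by (auto simp: minLI_def LI_def)
  have LIt: "LI ((\<lambda>p. bplus S p t) ` L)"
    unfolding LI_def
  proof (intro conjI ballI)
    show "(\<lambda>p. bplus S p t) ` L \<noteq> {}" using LI by (auto simp: LI_def)
    show "(\<lambda>p. bplus S p t) ` L \<subseteq> Op" using LO Oplus_add t by blast
    fix r q assume r: "r \<in> Op" and q: "q \<in> (\<lambda>p. bplus S p t) ` L"
    then obtain l where l: "l \<in> L" "q = bplus S l t" by blast
    have "bplus S r q = bplus S (bplus S r l) t" using Oplus_assoc[OF r _ t] l LO by auto
    moreover have "bplus S r l \<in> L" using LI r l(1) by (auto simp: LI_def)
    ultimately show "bplus S r q \<in> (\<lambda>p. bplus S p t) ` L" by blast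
  qed
  have "J = (\<lambda>p. bplus S p t) ` L" if J: "LI J" "J \<subseteq> (\<lambda>p. bplus S p t) ` L" for J
  proof -
    define M where "M = {l \<in> L. bplus S l t \<in> J}"
    have "LI M"
      unfolding LI_def
    proof (intro conjI ballI)
      obtain j where "j \<in> J" using J(1) by (auto simp: LI_def)
      then show "M \<noteq> {}" using J(2) by (auto simp: M_def)
      show "M \<subseteq> Op" using LO by (auto simp: M_def)
      fix r l assume r: "r \<in> Op" and l: "l \<in> M"
      have "bplus S r l \<in> L" using LI r l by (auto simp: LI_def M_def)
      moreover have "bplus S (bplus S r l) t = bplus S r (bplus S l t)"
        using Oplus_assoc[OF r _ t] l LO by (auto simp: M_def)
      moreover have "bplus S r (bplus S l t) \<in> J" using J(1) r l by (auto simp: LI_def M_def)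
      ultimately show "bplus S r l \<in> M" by (simp add: M_def)
    qed
    then have "M = L" using L by (auto simp: minLI_def M_def)
    then have "(\<lambda>p. bplus S p t) ` L \<subseteq> J" by (auto simp: M_def)
    then show ?thesis using J(2) by blast
  qed
  then show ?thesis using LIt by (auto simp: minLI_def)
qed

abbreviation TI :: "real set set set \<Rightarrow> bool" where
  "TI I \<equiv> two_sided_ideal S Op I"

lemma TI_Op: "TI Op"
  using Oplus_ne Oplus_add by (auto simp: two_sided_ideal_def)

lemma minLI_sub_TI: assumes L: "minLI L" and I: "TI I" shows "L \<subseteq> I"
proof -
  obtain q where q: "q \<in> I" using I by (auto simp: two_sided_ideal_def)
  obtain l where l: "l \<in> L" using L by (auto simp: minLI_def LI_def)
  have qO: "q \<in> Op" using q I by (auto simp: two_sided_ideal_def)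
  have lO: "l \<in> Op" using l L by (auto simp: minLI_def LI_def)
  have l'I: "bplus S q l \<in> I" using I q lO by (auto simp: two_sided_ideal_def)
  have l'L: "bplus S q l \<in> L" using L qO l by (auto simp: minLI_def LI_def)
  have "rt (bplus S q l) \<subseteq> I" using I l'I by (auto simp: two_sided_ideal_def rt_def)
  then show ?thesis using minLI_rt[OF L l'L] by simp
qed

definition K0 :: "real set set set" where
  "K0 = \<Inter>{I. TI I}"

lemma K0_least: "TI J \<Longrightarrow> K0 \<subseteq> J"
  by (auto simp: K0_def)

lemma TI_K0: "TI K0"
proof -
  obtain L where L: "minLI L" using minLI_exists by blast
  have LK: "L \<subseteq> K0" using minLI_sub_TI[OF L] by (auto simp: K0_def)
  have ne: "K0 \<noteq> {}" using LK L by (auto simp: minLI_def LI_def)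
  have sub: "K0 \<subseteq> Op" using K0_least[OF TI_Op] .
  show ?thesis
    unfolding two_sided_ideal_def
  proof (intro conjI ballI)
    show "K0 \<noteq> {}" by fact
    show "K0 \<subseteq> Op" by fact
    fix p q assume p: "p \<in> Op" and q: "q \<in> K0"
    show "bplus S p q \<in> K0"
      using p q unfolding K0_def two_sided_ideal_def by blast
    show "bplus S q p \<in> K0"
      using p q unfolding K0_def two_sided_ideal_def by blast
  qed
qed

lemma Kmin_eq: "Kmin S Op = K0"
  unfolding Kmin_def
proof (rule the_equality)
  show "TI K0 \<and> (\<forall>J. TI J \<longrightarrow> K0 \<subseteq> J)" using TI_K0 K0_least by blast
  fix I assume I: "TI I \<and> (\<forall>J. TI J \<longrightarrow> I \<subseteq> J)"
  then have "I \<subseteq> K0" using TI_K0 by blast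
  moreover have "K0 \<subseteq> I" using I K0_least by blast
  ultimately show "I = K0" by blast
qed

lemma K0_ne: "K0 \<noteq> {}" using TI_K0 by (simp add: two_sided_ideal_def)

lemma K0_sub: "K0 \<subseteq> Op" using TI_K0 by (simp add: two_sided_ideal_def)

lemma K0_left: "p \<in> Op \<Longrightarrow> q \<in> K0 \<Longrightarrow> bplus S p q \<in> K0"
  using TI_K0 by (simp add: two_sided_ideal_def)

lemma K0_right: "p \<in> Op \<Longrightarrow> q \<in> K0 \<Longrightarrow> bplus S q p \<in> K0"
  using TI_K0 by (simp add: two_sided_ideal_def)

lemma LO_TI: assumes L: "minLI L" shows "TI {bplus S l t | l t. l \<in> L \<and> t \<in> Op}"
proof -
  have LO: "L \<subseteq> Op" and LI: "LI L" using L by (auto simp: minLI_def LI_def)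
  show ?thesis
    unfolding two_sided_ideal_def
  proof (intro conjI ballI)
    obtain l where "l \<in> L" using LI by (auto simp: LI_def)
    obtain t where "t \<in> Op" using Oplus_ne by blast
    show "{bplus S l t | l t. l \<in> L \<and> t \<in> Op} \<noteq> {}" using \<open>l \<in> L\<close> \<open>t \<in> Op\<close> by blast
    show "{bplus S l t | l t. l \<in> L \<and> t \<in> Op} \<subseteq> Op" using LO Oplus_add by blast
    fix p q assume p: "p \<in> Op" and q: "q \<in> {bplus S l t | l t. l \<in> L \<and> t \<in> Op}"
    then obtain l t where lt: "l \<in> L" "t \<in> Op" "q = bplus S l t" by blast
    have lO: "l \<in> Op" using lt LO by blast
    have "bplus S p q = bplus S (bplus S p l) t" using Oplus_assoc[OF p lO lt(2)] lt by simp
    moreover have "bplus S p l \<in> L" using LI p lt by (auto simp: LI_def)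
    moreover have "bplus S q p = bplus S l (bplus S t p)" using Oplus_assoc[OF lO lt(2) p] lt by simp
    moreover have "bplus S t p \<in> Op" using Oplus_add lt p by blast
    ultimately show "bplus S p q \<in> {bplus S l t | l t. l \<in> L \<and> t \<in> Op}"
      "bplus S q p \<in> {bplus S l t | l t. l \<in> L \<and> t \<in> Op}" using lt by blast+
  qed
qed

lemma K0_minLI: assumes p: "p \<in> K0" shows "\<exists>L. minLI L \<and> p \<in> L"
proof -
  obtain L0 where L0: "minLI L0" using minLI_exists by blast
  have "p \<in> {bplus S l t | l t. l \<in> L0 \<and> t \<in> Op}" using K0_least[OF LO_TI[OF L0]] p by blast
  then obtain l t where lt: "l \<in> L0" "t \<in> Op" "p = bplus S l t" by blast
  have "minLI ((\<lambda>x. bplus S x t) ` L0)" using minLI_trans[OF L0 lt(2)] .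
  moreover have "p \<in> (\<lambda>x. bplus S x t) ` L0" using lt by blast
  ultimately show ?thesis by blast
qed

end



context dss
begin

lemma ps_imp:
  assumes AS: "A \<subseteq> S" and ps: "pw_syndetic_near_zero S A"
  shows "\<exists>p\<in>K0. A \<in> p"
proof -
  obtain F \<delta> where FP: "\<forall>n\<ge>1. finite (F n) \<and> F n \<noteq> {} \<and> F n \<subseteq> {0<..<1 / real n} \<inter> S \<and> 0 < \<delta> n \<and> \<delta> n < 1 / real n"
    and GP: "\<forall>G. finite G \<and> G \<noteq> {} \<and> G \<subseteq> S \<longrightarrow>
          (\<forall>\<mu>>0. \<exists>x\<in>S. 0 < x \<and> x < \<mu> \<and>
             (\<forall>n\<ge>1. (\<lambda>g. g + x) ` (G \<inter> {0<..<\<delta> n}) \<subseteq> (\<Union>t\<in>F n. ltrans S t A)))"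
    using ps unfolding pw_syndetic_near_zero_def by (elim exE conjE)
  have Fp: "finite (F n)" "F n \<noteq> {}" "F n \<subseteq> {0<..<1 / real n} \<inter> S" "0 < \<delta> n" "\<delta> n < 1 / real n"
    if "n \<ge> 1" for n using FP that by auto
  define C where "C n = (\<Union>t\<in>F n. ltrans S t A)" for n
  have CS: "C n \<subseteq> S" for n using ltrans_sub by (auto simp: C_def)
  define X where "X G \<mu> = {x \<in> S. x < \<mu> \<and> (\<forall>n\<ge>1. \<forall>g\<in>G. 0 < g \<and> g < \<delta> n \<longrightarrow> g + x \<in> C n)}" for G \<mu>
  have XS: "X G \<mu> \<subseteq> S" for G \<mu> by (auto simp: X_def)
  define I where "I = {(G, \<mu>). finite G \<and> G \<subseteq> S \<and> \<mu> > (0::real)}"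
  obtain s0 where s0: "s0 \<in> S" using S_ne by blast
  have Xne: "X G \<mu> \<noteq> {}" if G: "finite G" "G \<noteq> {}" "G \<subseteq> S" and mu: "\<mu> > 0" for G \<mu>
  proof -
    have GG: "finite G \<and> G \<noteq> {} \<and> G \<subseteq> S" using G by blast
    have "\<exists>x\<in>S. 0 < x \<and> x < \<mu> \<and> (\<forall>n\<ge>1. (\<lambda>g. g + x) ` (G \<inter> {0<..<\<delta> n}) \<subseteq> (\<Union>t\<in>F n. ltrans S t A))"
      using GP[rule_format, OF GG mu] .
    then obtain x where x: "x \<in> S" "0 < x" "x < \<mu>"
      and im: "\<forall>n\<ge>1. (\<lambda>g. g + x) ` (G \<inter> {0<..<\<delta> n}) \<subseteq> C n"
      unfolding C_def by (elim bexE conjE) blast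
    have "g + x \<in> C n" if n: "n \<ge> 1" and g: "g \<in> G" "0 < g" "g < \<delta> n" for n g
    proof -
      have sub: "(\<lambda>g. g + x) ` (G \<inter> {0<..<\<delta> n}) \<subseteq> C n" using im n by blast
      have "g \<in> G \<inter> {0<..<\<delta> n}" using g by simp
      then show ?thesis using sub by blast
    qed
    then have "x \<in> X G \<mu>" using x unfolding X_def by blast
    then show ?thesis by blast
  qed
  have Xmono: "X G' \<mu>' \<subseteq> X G \<mu>" if "G \<subseteq> G'" "\<mu>' \<le> \<mu>" for G G' \<mu> \<mu>'
    using that unfolding X_def by auto
  have f: "fip S ((\<lambda>(G, \<mu>). X G \<mu>) ` I)"
    unfolding fip_def
  proof (intro allI impI)
    fix F' assume F': "finite F' \<and> F' \<subseteq> (\<lambda>(G, \<mu>). X G \<mu>) ` I"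
    obtain I' where I': "I' \<subseteq> I" "finite I'" "F' = (\<lambda>(G, \<mu>). X G \<mu>) ` I'"
      using finite_subset_image[of F' "\<lambda>(G, \<mu>). X G \<mu>" I] F' by blast
    have I'p: "finite G \<and> G \<subseteq> S \<and> \<mu> > 0" if "(G, \<mu>) \<in> I'" for G \<mu>
      using subsetD[OF I'(1) that] by (simp add: I_def)
    have "snd ` I' \<subseteq> {0<..}" using I'p by force
    then obtain m where m: "m > 0" "\<forall>e\<in>snd ` I'. m \<le> e" using fin_pos I'(2) by blast
    define G' where "G' = insert s0 (\<Union>(fst ` I'))"
    have G'f: "finite G'" using I'(2) I'p unfolding G'_def by force
    have G'S: "G' \<subseteq> S" using I'p s0 unfolding G'_def by force
    have "X G' m \<noteq> {}" using Xne[OF G'f _ G'S m(1)] by (auto simp: G'_def)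
    moreover have "X G' m \<subseteq> S \<inter> \<Inter>F'"
    proof
      fix x assume x: "x \<in> X G' m"
      have "x \<in> B" if B: "B \<in> F'" for B
      proof -
        obtain G \<mu> where Gm: "(G, \<mu>) \<in> I'" "B = X G \<mu>" using B I'(3) by auto
        have "G \<subseteq> G'" using Gm(1) unfolding G'_def by force
        moreover have "m \<le> \<mu>" using m(2) Gm(1) by force
        ultimately show ?thesis using Xmono x Gm(2) by blast
      qed
      then show "x \<in> S \<inter> \<Inter>F'" using x XS by blast
    qed
    ultimately show "S \<inter> \<Inter>F' \<noteq> {}" by blast
  qed
  have P: "(\<lambda>(G, \<mu>). X G \<mu>) ` I \<subseteq> Pow S" using XS by auto
  obtain q where q: "ultrafilter_on S q" "(\<lambda>(G, \<mu>). X G \<mu>) ` I \<subseteq> q"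
    using uf_extend[OF P f] by blast
  have qX: "X G \<mu> \<in> q" if "finite G" "G \<subseteq> S" "\<mu> > 0" for G \<mu>
  proof -
    have "(G, \<mu>) \<in> I" using that by (simp add: I_def)
    then show ?thesis using q(2) by force
  qed
  have qO: "q \<in> Op"
  proof -
    have "S \<inter> {0<..<e} \<in> q" if e: "e > 0" for e
    proof -
      have "X {} e \<in> q" using qX[of "{}" e] e by simp
      moreover have "X {} e \<subseteq> S \<inter> {0<..<e}" using S_pos by (auto simp: X_def)
      ultimately show ?thesis using uf_mono[OF q(1)] by blast
    qed
    then show ?thesis using q(1) by (simp add: Oplus_def betaS_iff)
  qed
  have Cq: "ltrans S g (C n) \<in> q" if n: "n \<ge> 1" and g: "g \<in> S" "g < \<delta> n" for n g
  proof -
    have "X {g} 1 \<in> q" using qX[of "{g}" 1] g by simp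
    moreover have "X {g} 1 \<subseteq> ltrans S g (C n)"
      using n g S_pos[OF g(1)] by (auto simp: X_def ltrans_def)
    ultimately show ?thesis using uf_mono[OF q(1) _ _ ltrans_sub] by blast
  qed
  have Cv: "C n \<in> bplus S v q" if n: "n \<ge> 1" and v: "v \<in> Op" for n v
  proof -
    have "S \<inter> {0<..<\<delta> n} \<in> v" using Oplus_mem[OF v Fp(4)[OF n]] .
    moreover have "S \<inter> {0<..<\<delta> n} \<subseteq> {g \<in> S. ltrans S g (C n) \<in> q}" using Cq[OF n] by auto
    ultimately have "{g \<in> S. ltrans S g (C n) \<in> q} \<in> v" using uf_mono[OF Oplus_uf[OF v]] by blast
    then show ?thesis using CS by (simp add: mem_bplus)
  qed
  obtain r where r: "r \<in> K0" using K0_ne by blast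
  have rO: "r \<in> Op" using r K0_sub by blast
  define w where "w = bplus S r q"
  have wK: "w \<in> K0" unfolding w_def using K0_right[OF qO r] .
  have wO: "w \<in> Op" using wK K0_sub by blast
  have uw: "ultrafilter_on S w" using Oplus_uf[OF wO] .
  have "\<forall>n. \<exists>t. n \<ge> 1 \<longrightarrow> t \<in> F n \<and> ltrans S t A \<in> w"
  proof
    fix n
    show "\<exists>t. n \<ge> 1 \<longrightarrow> t \<in> F n \<and> ltrans S t A \<in> w"
    proof (cases "n \<ge> 1")
      case True
      have "C n \<in> w" using Cv[OF True rO] by (simp add: w_def)
      then obtain t where "t \<in> F n" "ltrans S t A \<in> w"
        using uf_UN[OF uw Fp(1)[OF True]] unfolding C_def by blast
      then show ?thesis by blast
    qed simp
  qed
  then obtain tn where tn: "\<And>n. n \<ge> 1 \<Longrightarrow> tn n \<in> F n \<and> ltrans S (tn n) A \<in> w"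
    by metis
  define T where "T = tn ` {1..}"
  have small: "\<exists>x\<in>S. x < e \<and> x \<notin> S - T" if e: "e > 0" for e
  proof -
    obtain k where k: "inverse (real (Suc k)) < e" using reals_Archimedean[OF e] by blast
    define n where "n = Suc k"
    have n1: "n \<ge> 1" by (simp add: n_def)
    have "tn n \<in> F n" using tn[OF n1] by blast
    then have "tn n \<in> S" "tn n < 1 / real n" using Fp(3)[OF n1] by auto
    moreover have "1 / real n < e" using k by (simp add: n_def inverse_eq_divide)
    moreover have "tn n \<in> T" using n1 by (simp add: T_def)
    ultimately show ?thesis by (intro bexI[of _ "tn n"]) auto
  qed
  have f2: "fip S ((\<lambda>e. S \<inter> {0<..<e} - (S - T)) ` {0<..})" by (rule fip_small[OF small])
  have P2: "(\<lambda>e. S \<inter> {0<..<e} - (S - T)) ` {0<..} \<subseteq> Pow S" by (intro image_subsetI) blast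
  obtain u where u: "ultrafilter_on S u" "(\<lambda>e. S \<inter> {0<..<e} - (S - T)) ` {0<..} \<subseteq> u"
    using uf_extend[OF P2 f2] by blast
  have um: "S \<inter> {0<..<e} - (S - T) \<in> u" if "e > 0" for e using u(2) that by auto
  have "S \<inter> {0<..<e} \<in> u" if "e > 0" for e
    by (rule uf_mono[OF u(1) um[OF that]]) auto
  then have uO: "u \<in> Op" using u(1) by (simp add: Oplus_def betaS_iff)
  have "S \<inter> {0<..<1} - (S - T) \<subseteq> {x \<in> S. ltrans S x A \<in> w}"
    using tn by (auto simp: T_def)
  then have "{x \<in> S. ltrans S x A \<in> w} \<in> u" using uf_mono[OF u(1) um[of 1]] by auto
  then have "A \<in> bplus S u w" using AS by (simp add: mem_bplus)
  moreover have "bplus S u w \<in> K0" using K0_left[OF uO wK] .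
  ultimately show ?thesis by blast
qed

end



context dss
begin

lemma imp_ps:
  assumes AS: "A \<subseteq> S" and p: "p \<in> K0" and Ap: "A \<in> p"
  shows "pw_syndetic_near_zero S A"
proof -
  obtain L where L: "minLI L" "p \<in> L" using K0_minLI[OF p] by blast
  have LO: "L \<subseteq> Op" and LI: "LI L" using L(1) by (auto simp: minLI_def LI_def)
  have Lb: "L \<subseteq> betaS S" using LO Oplus_sub by blast
  have Lc: "clo S L \<subseteq> L" using minLI_closed[OF L(1)] .
  have Lne: "L \<noteq> {}" using L(2) by blast
  have pO: "p \<in> Op" using LO L(2) by blast
  have up: "ultrafilter_on S p" using Oplus_uf[OF pO] .
  have cover: "\<exists>F'. finite F' \<and> F' \<subseteq> S \<inter> {0<..<e} \<and> L \<subseteq> (\<Union>x\<in>F'. hat S (ltrans S x A))"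
    if e: "e > 0" for e
  proof -
    have cov: "L \<subseteq> (\<Union>x\<in>S \<inter> {0<..<e}. hat S (ltrans S x A))"
    proof
      fix q assume q: "q \<in> L"
      have "p \<in> rt q" using minLI_rt[OF L(1) q] L(2) by simp
      then obtain r where r: "r \<in> Op" "p = bplus S r q" by (auto simp: rt_def)
      have ur: "ultrafilter_on S r" using Oplus_uf[OF r(1)] .
      have "{x \<in> S. ltrans S x A \<in> q} \<in> r" using Ap r(2) by (simp add: mem_bplus)
      then have "{x \<in> S. ltrans S x A \<in> q} \<inter> (S \<inter> {0<..<e}) \<in> r"
        using uf_Int[OF ur _ Oplus_mem[OF r(1) e]] by blast
      moreover have "{} \<notin> r" using uf_empty[OF ur] .
      ultimately obtain x where x: "x \<in> {x \<in> S. ltrans S x A \<in> q} \<inter> (S \<inter> {0<..<e})"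
        by (metis ex_in_conv)
      then have "x \<in> S \<inter> {0<..<e}" "q \<in> hat S (ltrans S x A)" using q Lb by (auto simp: hat_def)
      then show "q \<in> (\<Union>x\<in>S \<inter> {0<..<e}. hat S (ltrans S x A))" by blast
    qed
    have sub: "\<And>x. x \<in> S \<inter> {0<..<e} \<Longrightarrow> ltrans S x A \<subseteq> S" using ltrans_sub by blast
    show ?thesis using basic_cover[OF Lc Lb cov sub] by blast
  qed
  have "\<forall>n. \<exists>F'. n \<ge> 1 \<longrightarrow> finite F' \<and> F' \<subseteq> S \<inter> {0<..<1 / real n} \<and> L \<subseteq> (\<Union>x\<in>F'. hat S (ltrans S x A))"
  proof
    fix n :: nat
    show "\<exists>F'. n \<ge> 1 \<longrightarrow> finite F' \<and> F' \<subseteq> S \<inter> {0<..<1 / real n} \<and> L \<subseteq> (\<Union>x\<in>F'. hat S (ltrans S x A))"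
    proof (cases "n \<ge> 1")
      case True
      then have "1 / real n > 0" by simp
      from cover[OF this] obtain F' where
        F': "finite F' \<and> F' \<subseteq> S \<inter> {0<..<1 / real n} \<and> L \<subseteq> (\<Union>x\<in>F'. hat S (ltrans S x A))"
        by (elim exE)
      show ?thesis by (rule exI[of _ F'], rule impI, rule F')
    qed simp
  qed
  then obtain Fn where Fn: "\<And>n. n \<ge> 1 \<Longrightarrow> finite (Fn n) \<and> Fn n \<subseteq> S \<inter> {0<..<1 / real n} \<and> L \<subseteq> (\<Union>x\<in>Fn n. hat S (ltrans S x A))"
    by metis
  have Fne: "Fn n \<noteq> {}" if "n \<ge> 1" for n
    using Fn[OF that] Lne by blast
  define C where "C n = (\<Union>t\<in>Fn n. ltrans S t A)" for n
  have CS: "C n \<subseteq> S" for n using ltrans_sub by (auto simp: C_def)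
  have Cv: "C n \<in> bplus S v p" if n: "n \<ge> 1" and v: "v \<in> Op" for n v
  proof -
    have vp: "bplus S v p \<in> L" using LI v L(2) by (auto simp: LI_def)
    then obtain t where t: "t \<in> Fn n" "bplus S v p \<in> hat S (ltrans S t A)" using Fn[OF n] by blast
    have uvp: "ultrafilter_on S (bplus S v p)" using Oplus_uf vp LO by blast
    have "ltrans S t A \<in> bplus S v p" using t(2) by (simp add: hat_def)
    moreover have "ltrans S t A \<subseteq> C n" using t(1) by (auto simp: C_def)
    ultimately show ?thesis using uf_mono[OF uvp _ _ CS] by blast
  qed
  have "\<forall>n. \<exists>d. n \<ge> 1 \<longrightarrow> d > 0 \<and> S \<inter> {0<..<d} \<subseteq> {g \<in> S. ltrans S g (C n) \<in> p}"
  proof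
    fix n :: nat
    show "\<exists>d. n \<ge> 1 \<longrightarrow> d > 0 \<and> S \<inter> {0<..<d} \<subseteq> {g \<in> S. ltrans S g (C n) \<in> p}"
    proof (cases "n \<ge> 1")
      case True
      have Dv: "{g \<in> S. ltrans S g (C n) \<in> p} \<in> v" if "v \<in> Op" for v
        using Cv[OF True that] by (simp add: mem_bplus)
      have "\<exists>\<delta>>0. S \<inter> {0<..<\<delta>} \<subseteq> {g \<in> S. ltrans S g (C n) \<in> p}"
        by (rule small_in) (rule Dv)
      then obtain d where "d > 0 \<and> S \<inter> {0<..<d} \<subseteq> {g \<in> S. ltrans S g (C n) \<in> p}"
        by (elim exE)
      then show ?thesis by (intro exI[of _ d] impI)
    qed simp
  qed
  then obtain d0 where d0: "\<And>n. n \<ge> 1 \<Longrightarrow> d0 n > 0 \<and> S \<inter> {0<..<d0 n} \<subseteq> {g \<in> S. ltrans S g (C n) \<in> p}"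
    by metis
  define \<delta> where "\<delta> n = min (d0 n) (1 / (2 * real n))" for n
  have dpos: "\<delta> n > 0" if "n \<ge> 1" for n using d0[OF that] that by (simp add: \<delta>_def)
  have dlt: "\<delta> n < 1 / real n" if "n \<ge> 1" for n
  proof -
    have "1 / (2 * real n) < 1 / real n" using that by (simp add: field_simps)
    then show ?thesis by (simp add: \<delta>_def)
  qed
  have Dn: "ltrans S g (C n) \<in> p" if "n \<ge> 1" "g \<in> S" "g < \<delta> n" for n g
  proof -
    have "g \<in> S \<inter> {0<..<d0 n}" using that S_pos[OF that(2)] by (simp add: \<delta>_def)
    then show ?thesis using d0[OF that(1)] by blast
  qed
  show ?thesis
    unfolding pw_syndetic_near_zero_def
  proof (intro exI conjI allI impI)
    fix n :: nat assume n: "n \<ge> 1"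
    show "finite (Fn n)" using Fn[OF n] by blast
    show "Fn n \<noteq> {}" using Fne[OF n] .
    show "Fn n \<subseteq> {0<..<1 / real n} \<inter> S" using Fn[OF n] by blast
    show "0 < \<delta> n" using dpos[OF n] .
    show "\<delta> n < 1 / real n" using dlt[OF n] .
  next
    fix G :: "real set" and \<mu> :: real
    assume G: "finite G \<and> G \<noteq> {} \<and> G \<subseteq> S" and mu: "\<mu> > 0"
    define m0 where "m0 = Min G"
    have m0G: "m0 \<in> G" using G Min_in by (simp add: m0_def)
    have m0pos: "m0 > 0" using m0G G S_pos by blast
    have m0le: "m0 \<le> g" if "g \<in> G" for g using G that by (simp add: m0_def)
    define N where "N = nat \<lceil>1 / m0\<rceil>"
    have nN: "n \<le> N" if n: "n \<ge> 1" and g: "g \<in> G" "g < \<delta> n" for n g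
    proof -
      have gp: "g > 0" using g G S_pos by blast
      have "g < 1 / real n" using dlt[OF n] g by linarith
      then have "real n < 1 / g" using gp n by (simp add: field_simps)
      also have "1 / g \<le> 1 / m0" using m0le[OF g(1)] m0pos by (simp add: frac_le)
      also have "1 / m0 \<le> real N" unfolding N_def by linarith
      finally show ?thesis by simp
    qed
    define P where "P = {(n, g). n \<in> {1..N} \<and> g \<in> G \<and> g < \<delta> n}"
    have Pf: "finite P"
    proof -
      have "P \<subseteq> {1..N} \<times> G" by (auto simp: P_def)
      then show ?thesis using G finite_subset by blast
    qed
    define Fam where "Fam = insert (S \<inter> {0<..<\<mu>}) ((\<lambda>(n, g). ltrans S g (C n)) ` P)"
    have Famf: "finite Fam" using Pf by (simp add: Fam_def)
    have Famp: "Fam \<subseteq> p"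
    proof
      fix B assume "B \<in> Fam"
      then consider "B = S \<inter> {0<..<\<mu>}" | n g where "(n, g) \<in> P" "B = ltrans S g (C n)"
        unfolding Fam_def by blast
      then show "B \<in> p"
      proof cases
        case 1 then show ?thesis using Oplus_mem[OF pO mu] by simp
      next
        case 2 then show ?thesis using Dn G by (auto simp: P_def)
      qed
    qed
    have "S \<inter> \<Inter>Fam \<in> p" using uf_Inter[OF up Famf Famp] .
    then have "S \<inter> \<Inter>Fam \<noteq> {}" using uf_empty[OF up] by metis
    then obtain x where x: "x \<in> S \<inter> \<Inter>Fam" by blast
    have xmu: "x \<in> S \<inter> {0<..<\<mu>}" using x by (simp add: Fam_def)
    have xP: "x \<in> ltrans S g (C n)" if "(n, g) \<in> P" for n g
      using x that by (auto simp: Fam_def)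
    show "\<exists>x\<in>S. 0 < x \<and> x < \<mu> \<and> (\<forall>n\<ge>1. (\<lambda>g. g + x) ` (G \<inter> {0<..<\<delta> n}) \<subseteq> (\<Union>t\<in>Fn n. ltrans S t A))"
    proof (intro bexI conjI allI impI)
      show "x \<in> S" "0 < x" "x < \<mu>" using xmu by auto
      fix n :: nat assume n: "n \<ge> 1"
      show "(\<lambda>g. g + x) ` (G \<inter> {0<..<\<delta> n}) \<subseteq> (\<Union>t\<in>Fn n. ltrans S t A)"
      proof
        fix y assume "y \<in> (\<lambda>g. g + x) ` (G \<inter> {0<..<\<delta> n})"
        then obtain g where g: "g \<in> G" "g < \<delta> n" "y = g + x" by auto
        have "(n, g) \<in> P" using nN[OF n g(1,2)] n g by (simp add: P_def)
        then have "x \<in> ltrans S g (C n)" by (rule xP)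
        then have "g + x \<in> C n" by (simp add: ltrans_def)
        then show "y \<in> (\<Union>t\<in>Fn n. ltrans S t A)" using g(3) by (simp add: C_def)
      qed
    qed
  qed
qed


lemma ps_iff: "A \<subseteq> S \<Longrightarrow> pw_syndetic_near_zero S A \<longleftrightarrow> (\<exists>p\<in>K0. A \<in> p)"
  using ps_imp imp_ps by blast

lemma K0_uf: "p \<in> K0 \<Longrightarrow> ultrafilter_on S p"
  using K0_sub Oplus_uf by blast

lemma Kfilt_filter: "filter_on S (Kfilt S)"
  unfolding filter_on_def
proof (intro conjI ballI allI impI)
  show "Kfilt S \<subseteq> Pow S" by (auto simp: Kfilt_def)
  have "\<not> pw_syndetic_near_zero S {}"
  proof
    assume "pw_syndetic_near_zero S {}"
    then obtain p where "p \<in> K0" "{} \<in> p" using ps_imp by blast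
    then show False using uf_empty K0_uf by blast
  qed
  then show "S \<in> Kfilt S" by (simp add: Kfilt_def)
  obtain p where p: "p \<in> K0" using K0_ne by blast
  have "S \<in> p" using uf_S K0_uf[OF p] by blast
  then have "pw_syndetic_near_zero S S" using imp_ps[OF _ p] by blast
  then show "{} \<notin> Kfilt S" by (simp add: Kfilt_def)
next
  fix A B assume A: "A \<in> Kfilt S" and B: "B \<in> Kfilt S"
  have AS: "A \<subseteq> S" and nA: "\<not> pw_syndetic_near_zero S (S - A)" using A by (auto simp: Kfilt_def)
  have BS: "B \<subseteq> S" and nB: "\<not> pw_syndetic_near_zero S (S - B)" using B by (auto simp: Kfilt_def)
  have "\<not> pw_syndetic_near_zero S (S - (A \<inter> B))"
  proof
    assume "pw_syndetic_near_zero S (S - (A \<inter> B))"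
    then obtain p where p: "p \<in> K0" "S - (A \<inter> B) \<in> p" using ps_imp by blast
    have "S - (A \<inter> B) = (S - A) \<union> (S - B)" by blast
    then have "S - A \<in> p \<or> S - B \<in> p" using uf_Un[OF K0_uf[OF p(1)]] p(2) by simp
    then show False
    proof
      assume "S - A \<in> p" then show False using imp_ps[OF _ p(1)] nA by blast
    next
      assume "S - B \<in> p" then show False using imp_ps[OF _ p(1)] nB by blast
    qed
  qed
  then show "A \<inter> B \<in> Kfilt S" using AS by (auto simp: Kfilt_def)
next
  fix A B assume A: "A \<in> Kfilt S" and AB: "A \<subseteq> B \<and> B \<subseteq> S"
  have nA: "\<not> pw_syndetic_near_zero S (S - A)" using A by (auto simp: Kfilt_def)
  have "\<not> pw_syndetic_near_zero S (S - B)"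
  proof
    assume "pw_syndetic_near_zero S (S - B)"
    then obtain p where p: "p \<in> K0" "S - B \<in> p" using ps_imp by blast
    have "S - A \<in> p" using uf_mono[OF K0_uf[OF p(1)] p(2)] AB by blast
    then show False using imp_ps[OF _ p(1)] nA by blast
  qed
  then show "B \<in> Kfilt S" using AB by (auto simp: Kfilt_def)
qed

lemma clo_K0: "clo S K0 = filter_closure S (Kfilt S)"
proof
  show "clo S K0 \<subseteq> filter_closure S (Kfilt S)"
  proof
    fix p assume p: "p \<in> clo S K0"
    then have pb: "p \<in> betaS S" and up: "ultrafilter_on S p" by (auto simp: clo_def betaS_iff)
    have "A \<in> p" if A: "A \<in> Kfilt S" for A
    proof (rule ccontr)
      assume "A \<notin> p"
      moreover have AS: "A \<subseteq> S" and nA: "\<not> pw_syndetic_near_zero S (S - A)" using A by (auto simp: Kfilt_def)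
      ultimately have "S - A \<in> p" using uf_compl[OF up] by blast
      then obtain x where "x \<in> K0" "S - A \<in> x" using p by (auto simp: clo_def)
      then show False using imp_ps[of "S - A" x] nA by blast
    qed
    then show "p \<in> filter_closure S (Kfilt S)" using pb by (auto simp: filter_closure_def)
  qed
next
  show "filter_closure S (Kfilt S) \<subseteq> clo S K0"
  proof
    fix p assume p: "p \<in> filter_closure S (Kfilt S)"
    then have pb: "p \<in> betaS S" and up: "ultrafilter_on S p" and Kp: "Kfilt S \<subseteq> p"
      by (auto simp: filter_closure_def betaS_iff)
    have "\<exists>x\<in>K0. A \<in> x" if A: "A \<in> p" for A
    proof (rule ccontr)
      assume n: "\<not> (\<exists>x\<in>K0. A \<in> x)"
      have AS: "A \<subseteq> S" using uf_sub[OF up A] .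
      have "\<not> pw_syndetic_near_zero S A" using ps_imp[OF AS] n by blast
      moreover have "S - (S - A) = A" using AS by blast
      ultimately have "S - A \<in> Kfilt S" by (simp add: Kfilt_def)
      then have "S - A \<in> p" using Kp by blast
      then show False using uf_compl2[OF up A] by blast
    qed
    then show "p \<in> clo S K0" using pb by (simp add: clo_def)
  qed
qed

lemma clo_K0_Op: "clo S K0 \<subseteq> Op"
  using clo_mono[OF K0_sub] Oplus_closed by blast

lemma clo_K0_add: assumes p: "p \<in> clo S K0" and q: "q \<in> clo S K0"
  shows "bplus S p q \<in> clo S K0"
proof -
  have pO: "p \<in> Op" and qO: "q \<in> Op" using p q clo_K0_Op by blast+
  have pq: "bplus S p q \<in> betaS S" using Oplus_add[OF pO qO] Oplus_sub by blast
  have "\<exists>x\<in>K0. A \<in> x" if A: "A \<in> bplus S p q" for A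
  proof -
    have AS: "A \<subseteq> S" and B: "{x \<in> S. ltrans S x A \<in> q} \<in> p" using A by (auto simp: mem_bplus)
    then obtain r where r: "r \<in> K0" "{x \<in> S. ltrans S x A \<in> q} \<in> r" using p by (auto simp: clo_def)
    have "A \<in> bplus S r q" using AS r(2) by (simp add: mem_bplus)
    moreover have "bplus S r q \<in> K0" using K0_right[OF qO r(1)] .
    ultimately show ?thesis by blast
  qed
  then show ?thesis using pq by (simp add: clo_def)
qed

lemma main:
  "filter_on S (Kfilt S)
    \<and> (betaTop S) closure_of (Kmin S (Oplus S)) = filter_closure S (Kfilt S)
    \<and> compactin (betaTop S) (filter_closure S (Kfilt S))
    \<and> filter_closure S (Kfilt S) \<noteq> {}
    \<and> (\<forall>p\<in>filter_closure S (Kfilt S). \<forall>q\<in>filter_closure S (Kfilt S).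
         bplus S p q \<in> filter_closure S (Kfilt S))"
proof -
  have Kb: "K0 \<subseteq> betaS S" using K0_sub Oplus_sub by blast
  have c1: "(betaTop S) closure_of (Kmin S (Oplus S)) = filter_closure S (Kfilt S)"
    using closure_eq[OF Kb] Kmin_eq clo_K0 by simp
  have c2: "compactin (betaTop S) (filter_closure S (Kfilt S))"
    using compact_clo[OF clo_clo clo_sub_beta, of S K0] clo_K0 by simp
  have c3: "filter_closure S (Kfilt S) \<noteq> {}"
    using sub_clo[OF Kb] K0_ne clo_K0 by blast
  have c4: "\<forall>p\<in>filter_closure S (Kfilt S). \<forall>q\<in>filter_closure S (Kfilt S).
         bplus S p q \<in> filter_closure S (Kfilt S)"
    using clo_K0_add clo_K0 by blast
  show ?thesis using Kfilt_filter c1 c2 c3 c4 by blast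
qed

end

theorem lemma3p5:
  fixes S :: "real set"
  assumes "dense_subsemigroup S"
  shows "filter_on S (Kfilt S)
    \<and> (betaTop S) closure_of (Kmin S (Oplus S)) = filter_closure S (Kfilt S)
    \<and> compactin (betaTop S) (filter_closure S (Kfilt S))
    \<and> filter_closure S (Kfilt S) \<noteq> {}
    \<and> (\<forall>p\<in>filter_closure S (Kfilt S). \<forall>q\<in>filter_closure S (Kfilt S).
         bplus S p q \<in> filter_closure S (Kfilt S))"
proof -
  interpret dss S by (rule dss.intro) (rule assms)
  show ?thesis by (rule main)
qed


end
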